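(* Let $\mathcal P$ and $\mathcal U$ be a Preisach operator and its potential operator satisfying the assumptions in the context, so that $q\frac{d}{dt}\mathcal P[q]-\frac{d}{dt}\mathcal U[q]\ge0$ a.e. for all $q\in W^{1,1}(0,T)$. Let $c>0$, $\kappa>0$, $e\in\mathbb R$ be constants and $f\in C^1(\mathbb R)$ with $f>0$ and $f'$ bounded on bounded sets. For $\varepsilon,E\in W^{1,1}(0,T)$ set $q=E/f(\varepsilon)$ and $$\sigma=c\varepsilon-eE+f'(\varepsilon)\,\mathcal U[q],\qquad D=e\varepsilon+\kappa E+\mathcal P[q],\qquad F=\tfrac c2\varepsilon^2+\tfrac\kappa2E^2+f(\varepsilon)\,\mathcal U[q].$$ Then $$\dot\varepsilon\,\sigma+\dot D\,E-\dot F\ge0\quad\text{a.e. in }(0,T).$$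
   Context: Play operator: for $r>0$ and $q\in W^{1,1}(0,T)$, $\xi_r=\xi_r[q]$ solves $|q-\xi_r|\le r$, $\dot\xi_r(q-\xi_r-rz)\ge0$ a.e. for all $|z|\le1$, $\xi_r(0)=\max\{q(0)-r,\min\{0,q(0)+r\}\}$. Preisach operator $\mathcal P[q](t)=\int_0^\infty g(r,\xi_r[q](t))\,dr$ with $g(r,0)=0$, $0\le\partial_vg(r,v)\le\mu(r)$, $\mu\in L^1(0,\infty)$, $|v|\partial_vg(r,v)\le\mu_1(r)$ with $\mu_1\in L^1(0,\infty)$; potential $\mathcal U[q](t)=\int_0^\infty G(r,\xi_r[q](t))\,dr$, $G(r,v)=\int_0^v v'\partial_vg(r,v')\,dv'$. *)

theory Defs
  imports "HOL-Analysis.Analysis"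
begin

definition W11 :: "real \<Rightarrow> (real \<Rightarrow> real) \<Rightarrow> bool" where
  "W11 T u \<longleftrightarrow> (\<exists>v. set_integrable lborel {0..T} v \<and>
      (\<forall>t\<in>{0..T}. u t = u 0 + (LINT s:{0..t}|lborel. v s)))"

definition play_solution :: "real \<Rightarrow> real \<Rightarrow> (real \<Rightarrow> real) \<Rightarrow> (real \<Rightarrow> real) \<Rightarrow> bool" where
  "play_solution T r q xi \<longleftrightarrow>
     W11 T xi \<and>
     (\<forall>t\<in>{0..T}. \<bar>q t - xi t\<bar> \<le> r) \<and>
     (AE t in lborel. t \<in> {0<..<T} \<longrightarrow>
        (\<exists>d. (xi has_real_derivative d) (at t) \<and>
             (\<forall>z. \<bar>z\<bar> \<le> 1 \<longrightarrow> d * (q t - xi t - r * z) \<ge> 0))) \<and>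
     xi 0 = max (q 0 - r) (min 0 (q 0 + r))"

text \<open>Preisach operator, given the family of play outputs xi r (r > 0).\<close>
definition preisach :: "(real \<Rightarrow> real \<Rightarrow> real) \<Rightarrow> (real \<Rightarrow> real \<Rightarrow> real) \<Rightarrow> real \<Rightarrow> real" where
  "preisach g xi t = (LINT r:{0<..}|lborel. g r (xi r t))"

definition Gpot :: "(real \<Rightarrow> real \<Rightarrow> real) \<Rightarrow> real \<Rightarrow> real \<Rightarrow> real" where
  "Gpot dg r v = (LBINT v'=0..v. v' * dg r v')"

definition potential :: "(real \<Rightarrow> real \<Rightarrow> real) \<Rightarrow> (real \<Rightarrow> real \<Rightarrow> real) \<Rightarrow> real \<Rightarrow> real" where
  "potential dg xi t = (LINT r:{0<..}|lborel. Gpot dg r (xi r t))"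

end

theory Submission
  imports Defs
begin


lemma right_incr_mono:
  fixes G :: "real \<Rightarrow> real"
  assumes xy: "x \<le> y" and cont: "continuous_on {x..y} G"
    and loc: "\<And>z. z \<in> {x..<y} \<Longrightarrow> \<exists>\<delta>>0. \<forall>w. z < w \<and> w < z + \<delta> \<longrightarrow> G z \<le> G w"
  shows "G x \<le> G y"
proof -
  define S where "S = {z \<in> {x..y}. \<forall>w\<in>{x..z}. G x \<le> G w}"
  have xS: "x \<in> S" using xy by (auto simp: S_def)
  have bdd: "bdd_above S" unfolding bdd_above_def S_def by auto
  define s where "s = Sup S"
  have xs: "x \<le> s" unfolding s_def using xS bdd by (rule cSup_upper)
  have sy: "s \<le> y" unfolding s_def using xS by (intro cSup_least) (auto simp: S_def)
  have below: "G x \<le> G w" if "w \<in> {x..<s}" for w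
  proof -
    from that have "w < Sup S" by (simp add: s_def)
    then obtain z where "z \<in> S" "w < z" using xS bdd by (metis empty_iff less_cSup_iff)
    then show ?thesis using that by (auto simp: S_def)
  qed
  have Gs: "G x \<le> G s"
  proof (rule ccontr)
    assume "\<not> G x \<le> G s"
    then have "G x - G s > 0" by simp
    with cont xs sy xy obtain d where d: "d > 0" "\<And>w. w \<in> {x..y} \<Longrightarrow> dist w s < d \<Longrightarrow> dist (G w) (G s) < G x - G s"
      unfolding continuous_on_iff by (metis atLeastAtMost_iff)
    show False
    proof (cases "x = s")
      case True then show False using \<open>\<not> G x \<le> G s\<close> by simp
    next
      case False
      define w where "w = max x (s - d/2)"
      have "w \<in> {x..<s}" using False xs d by (auto simp: w_def)
      moreover have "dist w s < d" using False xs d by (auto simp: w_def dist_real_def)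
      ultimately have "dist (G w) (G s) < G x - G s" using d sy by auto
      moreover have "G x \<le> G w" using below \<open>w \<in> {x..<s}\<close> by blast
      ultimately show False by (simp add: dist_real_def)
    qed
  qed
  have sS: "s \<in> S"
    using xs sy below Gs by (auto simp: S_def) (metis atLeastLessThan_iff order_le_less)
  show ?thesis
  proof (cases "s < y")
    case True
    then obtain d where d: "d > 0" "\<And>w. s < w \<and> w < s + d \<longrightarrow> G s \<le> G w"
      using loc[of s] xs by auto
    define w where "w = min (s + d/2) y"
    have "w \<in> S"
      unfolding S_def
    proof safe
      show "w \<in> {x..y}" using xs True d by (auto simp: w_def)
      fix w' assume "w' \<in> {x..w}"
      show "G x \<le> G w'"
      proof (cases "w' \<le> s")
        case True then show ?thesis using sS \<open>w' \<in> {x..w}\<close> by (auto simp: S_def)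
      next
        case False
        then have "G s \<le> G w'" using d \<open>w' \<in> {x..w}\<close> by (auto simp: w_def)
        then show ?thesis using Gs by simp
      qed
    qed
    then have "w \<le> s" unfolding s_def using bdd by (rule cSup_upper)
    then show ?thesis using True d by (auto simp: w_def)
  next
    case False
    then have "s = y" using sy by simp
    then show ?thesis using sS xy by (auto simp: S_def)
  qed
qed

lemma barrier:
  fixes w :: "real \<Rightarrow> real"
  assumes ts: "t \<le> s" and cont: "continuous_on {t..s} w" and wt: "w t \<le> L"
    and step: "\<And>t0 u. t \<le> t0 \<Longrightarrow> t0 < u \<Longrightarrow> u \<le> s \<Longrightarrow> w t0 \<le> L \<Longrightarrow>
                  (\<forall>x\<in>{t0<..u}. L < w x) \<Longrightarrow> w u \<le> w t0"
  shows "w s \<le> L"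
proof (rule ccontr)
  assume ws: "\<not> w s \<le> L"
  define S where "S = {t..s} \<inter> w -` {..L}"
  have cS: "closed S" unfolding S_def
    by (rule continuous_closed_preimage[OF cont]) auto
  have tS: "t \<in> S" using ts wt by (auto simp: S_def)
  have bdd: "bdd_above S" unfolding S_def bdd_above_def by auto
  define t0 where "t0 = Sup S"
  have t0S: "t0 \<in> S" unfolding t0_def using tS bdd cS by (intro closed_contains_Sup) auto
  have tt0: "t \<le> t0" unfolding t0_def using tS bdd by (rule cSup_upper)
  have t0s: "t0 < s" using t0S ws by (auto simp: S_def order_le_less)
  have above: "L < w x" if "x \<in> {t0<..s}" for x
  proof (rule ccontr)
    assume "\<not> L < w x"
    then have "x \<in> S" using that tt0 by (auto simp: S_def)
    then have "x \<le> t0" unfolding t0_def using bdd by (rule cSup_upper)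
    then show False using that by simp
  qed
  have "w s \<le> w t0" by (rule step[OF tt0 t0s order_refl]) (use t0S above in \<open>auto simp: S_def\<close>)
  then show False using t0S ws by (auto simp: S_def)
qed

lemma restrict_integrable:
  fixes \<phi> :: "real \<Rightarrow> real"
  assumes int: "\<phi> integrable_on {a..b}" and pos: "\<And>x. x \<in> {a..b} \<Longrightarrow> 0 \<le> \<phi> x"
    and U: "U \<in> sets lebesgue"
  shows "(\<lambda>x. if x \<in> U then \<phi> x else 0) integrable_on {a..b}"
proof -
  have "\<phi> absolutely_integrable_on {a..b}" by (rule nonnegative_absolutely_integrable_1[OF int pos])
  then have "\<phi> absolutely_integrable_on (U \<inter> {a..b})"
    by (rule set_integrable_subset) (use U in auto)
  then have "\<phi> integrable_on (U \<inter> {a..b})" using absolutely_integrable_on_def by blast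
  then show ?thesis by (simp add: integrable_restrict_Int)
qed

lemma small_open_cover:
  fixes \<phi> :: "real \<Rightarrow> real"
  assumes int: "\<phi> integrable_on {a..b}" and pos: "\<And>x. x \<in> {a..b} \<Longrightarrow> 0 \<le> \<phi> x"
    and N: "negligible N" and eta: "\<eta> > 0"
  obtains U where "open U" "N \<subseteq> U" "(\<lambda>x. if x \<in> U then \<phi> x else 0) integrable_on {a..b}"
     "integral {a..b} (\<lambda>x. if x \<in> U then \<phi> x else 0) < \<eta>"
proof -
  have Nl: "N \<in> sets lebesgue" using N by (rule negligible_imp_sets)
  have "\<forall>n::nat. \<exists>T. open T \<and> N \<subseteq> T \<and> (T - N) \<in> lmeasurable \<and> emeasure lebesgue (T - N) < ennreal (1 / (Suc n))"
  proof
    fix n :: nat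
    obtain T where "open T" "N \<subseteq> T" "(T - N) \<in> lmeasurable" "emeasure lebesgue (T - N) < ennreal (1 / (Suc n))"
      using sets_lebesgue_outer_open[OF Nl, of "1 / Suc n"] by auto
    then show "\<exists>T. open T \<and> N \<subseteq> T \<and> (T - N) \<in> lmeasurable \<and> emeasure lebesgue (T - N) < ennreal (1 / (Suc n))"
      by blast
  qed
  then obtain T where T: "\<And>n. open (T n)" "\<And>n. N \<subseteq> T n" "\<And>n. (T n - N) \<in> lmeasurable"
      "\<And>n. emeasure lebesgue (T n - N) < ennreal (1 / (Suc n))"
    by metis
  define V where "V n = (\<Inter>k\<in>{..n}. T k)" for n
  have Vo: "open (V n)" for n unfolding V_def using T(1) by (intro open_INT) auto
  have NV: "N \<subseteq> V n" for n unfolding V_def using T(2) by auto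
  define W where "W = (\<Inter>n. T n)"
  have mT: "measure lebesgue (T n - N) < 1 / Suc n" for n
  proof -
    have "emeasure lebesgue (T n - N) = ennreal (measure lebesgue (T n - N))"
      using T(3)[of n] by (rule emeasure_eq_measure2)
    then have "ennreal (measure lebesgue (T n - N)) < ennreal (1 / Suc n)" using T(4)[of n] by simp
    then show ?thesis by (simp add: ennreal_less_iff)
  qed
  have "negligible (W - N)"
    unfolding negligible_outer_le
  proof (intro allI impI)
    fix e :: real assume "e > 0"
    then obtain n :: nat where n: "1 / Suc n < e" using nat_approx_posE by blast
    show "\<exists>T'. W - N \<subseteq> T' \<and> T' \<in> lmeasurable \<and> measure lebesgue T' \<le> e"
    proof (rule exI[of _ "T n - N"], intro conjI)
      show "W - N \<subseteq> T n - N" unfolding W_def by blast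
      show "T n - N \<in> lmeasurable" by (rule T(3))
      show "measure lebesgue (T n - N) \<le> e" using mT[of n] n by linarith
    qed
  qed
  then have Wn: "negligible W"
  proof (rule negligible_subset[OF negligible_Un[OF _ N]])
    show "W \<subseteq> (W - N) \<union> N" by blast
  qed
  define f where "f n x = (if x \<in> V n then \<phi> x else 0)" for n x
  define g where "g x = (if x \<in> W then \<phi> x else 0)" for x
  have fint: "f n integrable_on {a..b}" for n
    unfolding f_def by (rule restrict_integrable[OF int pos]) (use Vo in auto)
  have lim: "(\<lambda>n. f n x) \<longlonglongrightarrow> g x" if "x \<in> {a..b}" for x
  proof (cases "x \<in> W")
    case True
    then have "f n x = \<phi> x" for n by (auto simp: f_def V_def W_def)
    then show ?thesis using True by (simp add: g_def)
  next
    case False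
    then obtain k where "x \<notin> T k" by (auto simp: W_def)
    then have "f n x = 0" if "n \<ge> k" for n using that by (auto simp: f_def V_def)
    then have "eventually (\<lambda>n. f n x = 0) sequentially" by (auto simp: eventually_sequentially)
    then show ?thesis using False by (simp add: g_def tendsto_eventually)
  qed
  have bnd: "norm (f n x) \<le> \<phi> x" if "x \<in> {a..b}" for n x using pos[OF that] by (simp add: f_def)
  have conv: "(\<lambda>n. integral {a..b} (f n)) \<longlonglongrightarrow> integral {a..b} g"
    by (rule dominated_convergence(2)[OF fint int bnd lim])
  have "(g has_integral 0) {a..b}"
    by (rule has_integral_spike[OF Wn _ has_integral_0]) (auto simp: g_def)
  then have "integral {a..b} g = 0" by (rule integral_unique)
  with conv eta have "eventually (\<lambda>n. integral {a..b} (f n) < \<eta>) sequentially"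
    by (metis order_tendstoD(2))
  then obtain n where "integral {a..b} (f n) < \<eta>" unfolding eventually_sequentially by blast
  moreover have "(\<lambda>x. if x \<in> V n then \<phi> x else 0) integrable_on {a..b}"
    by (rule restrict_integrable[OF int pos]) (use Vo in auto)
  moreover have "f n = (\<lambda>x. if x \<in> V n then \<phi> x else 0)" by (rule ext) (simp add: f_def)
  ultimately show ?thesis using that[of "V n"] Vo NV by simp
qed

lemma deriv_eps:
  fixes F :: "real \<Rightarrow> real"
  assumes "(F has_real_derivative d) (at z)" "e > 0"
  shows "\<exists>s>0. \<forall>h. h \<noteq> 0 \<and> \<bar>h\<bar> < s \<longrightarrow> \<bar>(F (z + h) - F z) / h - d\<bar> < e"
  using assms unfolding DERIV_def LIM_eq by (simp add: real_norm_def)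

lemma mono_ae:
  fixes F \<phi> :: "real \<Rightarrow> real"
  assumes ab: "a \<le> b" and cont: "continuous_on {a..b} F"
    and int: "\<phi> integrable_on {a..b}" and pos: "\<And>x. x \<in> {a..b} \<Longrightarrow> 0 \<le> \<phi> x"
    and dom: "\<And>x y. a \<le> x \<Longrightarrow> x \<le> y \<Longrightarrow> y \<le> b \<Longrightarrow> F x - F y \<le> integral {x..y} \<phi>"
    and N: "negligible N"
    and good: "\<And>z. z \<in> {a<..<b} \<Longrightarrow> z \<notin> N \<Longrightarrow> \<exists>d\<ge>0. (F has_real_derivative d) (at z)"
  shows "F a \<le> F b"
proof -
  have key: "F a - F b \<le> \<eta> * (b - a + 1)" if eta: "\<eta> > 0" for \<eta>
  proof -
    have N': "negligible (N \<union> {a})" using N by (intro negligible_Un) auto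
    obtain U where U: "open U" "N \<union> {a} \<subseteq> U" "(\<lambda>x. if x \<in> U then \<phi> x else 0) integrable_on {a..b}"
       "integral {a..b} (\<lambda>x. if x \<in> U then \<phi> x else 0) < \<eta>"
      using small_open_cover[OF int pos N' eta] by blast
    define \<phi>U where "\<phi>U = (\<lambda>x. if x \<in> U then \<phi> x else 0)"
    define \<Psi> where "\<Psi> z = integral {a..z} \<phi>U" for z
    define G where "G z = F z + \<eta> * z + \<Psi> z" for z
    have \<phi>Uint: "\<phi>U integrable_on {a..b}" using U(3) by (simp add: \<phi>U_def)
    have \<phi>Upos: "0 \<le> \<phi>U x" if "x\<in>{a..b}" for x using pos[OF that] by (simp add: \<phi>U_def)
    have \<Psi>diff: "\<Psi> w - \<Psi> z = integral {z..w} \<phi>U" if "a \<le> z" "z \<le> w" "w \<le> b" for z w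
    proof -
      have "\<phi>U integrable_on {a..w}" by (rule integrable_subinterval_real[OF \<phi>Uint]) (use that in auto)
      then have "integral {a..z} \<phi>U + integral {z..w} \<phi>U = integral {a..w} \<phi>U"
        using that by (intro Henstock_Kurzweil_Integration.integral_combine[OF _ _ \<open>\<phi>U integrable_on {a..w}\<close>]) auto
      then show ?thesis by (simp add: \<Psi>_def)
    qed
    have \<Psi>mono: "\<Psi> z \<le> \<Psi> w" if "a \<le> z" "z \<le> w" "w \<le> b" for z w
    proof -
      have "0 \<le> integral {z..w} \<phi>U"
        using that \<phi>Upos by (intro integral_nonneg integrable_subinterval_real[OF \<phi>Uint]) auto
      then show ?thesis using \<Psi>diff[OF that] by simp
    qed
    have \<Psi>cont: "continuous_on {a..b} \<Psi>"
      unfolding \<Psi>_def by (rule indefinite_integral_continuous_1[OF \<phi>Uint])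
    have Gcont: "continuous_on {a..b} G"
      unfolding G_def by (intro continuous_intros cont \<Psi>cont)
    have loc: "\<exists>\<delta>>0. \<forall>w. z < w \<and> w < z + \<delta> \<longrightarrow> G z \<le> G w" if z: "z \<in> {a..<b}" for z
    proof (cases "z \<in> U")
      case True
      then obtain \<delta> where \<delta>: "\<delta> > 0" "ball z \<delta> \<subseteq> U" using U(1) openE by blast
      show ?thesis
      proof (intro exI[of _ "min \<delta> (b - z)"] conjI allI impI)
        show "0 < min \<delta> (b - z)" using \<delta> z by auto
        fix w assume w: "z < w \<and> w < z + min \<delta> (b - z)"
        have sub: "{z..w} \<subseteq> U"
        proof
          fix y assume "y \<in> {z..w}"
          then have "y \<in> ball z \<delta>" using w by (auto simp: dist_real_def)
          then show "y \<in> U" using \<delta> by blast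
        qed
        have "integral {z..w} \<phi>U = integral {z..w} \<phi>"
          using sub by (intro integral_cong) (auto simp: \<phi>U_def)
        moreover have "F z - F w \<le> integral {z..w} \<phi>" using z w by (intro dom) auto
        moreover have "\<Psi> w - \<Psi> z = integral {z..w} \<phi>U" using z w by (intro \<Psi>diff) auto
        ultimately show "G z \<le> G w" using w eta unfolding G_def
          by (smt (verit) mult_left_mono)
      qed
    next
      case False
      then have z': "z \<in> {a<..<b}" "z \<notin> N" using z U(2) by (auto simp: order_le_less)
      obtain d where d: "d \<ge> 0" "(F has_real_derivative d) (at z)" using good[OF z'] by blast
      obtain s where s: "s > 0" "\<And>h. h \<noteq> 0 \<and> \<bar>h\<bar> < s \<Longrightarrow> \<bar>(F (z + h) - F z) / h - d\<bar> < \<eta>"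
        using deriv_eps[OF d(2) eta] by blast
      show ?thesis
      proof (intro exI[of _ "min s (b - z)"] conjI allI impI)
        show "0 < min s (b - z)" using s z by auto
        fix w assume w: "z < w \<and> w < z + min s (b - z)"
        define h where "h = w - z"
        have h: "h > 0" "\<bar>h\<bar> < s" using w by (auto simp: h_def)
        have "\<bar>(F (z + h) - F z) / h - d\<bar> < \<eta>" using s(2) h by auto
        then have "(F w - F z) / h > - \<eta>" using d(1) by (simp add: h_def)
        then have "F w - F z > - \<eta> * h" using h by (simp add: field_simps)
        moreover have "\<Psi> z \<le> \<Psi> w" using z w by (intro \<Psi>mono) auto
        ultimately show "G z \<le> G w" unfolding G_def h_def by (simp add: algebra_simps)
      qed
    qed
    have "G a \<le> G b" by (rule right_incr_mono[OF ab Gcont loc])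
    moreover have "\<Psi> a = 0" by (simp add: \<Psi>_def)
    moreover have "\<Psi> b < \<eta>" using U(4) by (simp add: \<Psi>_def \<phi>U_def)
    ultimately show ?thesis using eta ab unfolding G_def by (simp add: algebra_simps)
  qed
  show ?thesis
  proof (rule field_le_epsilon[where y = "F b", simplified add.commute[of "F b"]], goal_cases)
    case (1 e)
    have "F a - F b \<le> (e / (b - a + 1)) * (b - a + 1)" using 1 ab by (intro key) auto
    also have "\<dots> = e" using ab by simp
    finally show ?case by simp
  qed
qed

lemma right_avg:
  fixes v :: "real \<Rightarrow> real"
  assumes "\<And>c d. v integrable_on {c..d}"
  obtains N where "negligible N"
    "\<And>x e. x \<notin> N \<Longrightarrow> 0 < e \<Longrightarrow> \<exists>d>0. \<forall>h. 0 < h \<and> h < d \<longrightarrow> \<bar>integral {x..x+h} v / h - v x\<bar> < e"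
proof -
  have "\<And>c d. v integrable_on cbox c d" using assms by simp
  from integrable_ccontinuous_explicit[of v, OF this]
  obtain N where "negligible N" and N: "\<And>x e. \<lbrakk>x \<notin> N; 0 < e\<rbrakk> \<Longrightarrow>
               \<exists>d>0. \<forall>h. 0 < h \<and> h < d \<longrightarrow> norm(integral (cbox x (x + h *\<^sub>R One)) v /\<^sub>R h ^ DIM(real) - v x) < e"
    by metis
  show ?thesis
  proof (rule that[OF \<open>negligible N\<close>])
    fix x e :: real assume "x \<notin> N" "0 < e"
    from N[OF this] show "\<exists>d>0. \<forall>h. 0 < h \<and> h < d \<longrightarrow> \<bar>integral {x..x+h} v / h - v x\<bar> < e"
      by (simp add: divide_inverse_commute)
  qed
qed

lemma ldt:
  fixes v :: "real \<Rightarrow> real"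
  assumes int: "v integrable_on {a..b}"
  obtains N where "negligible N"
    "\<And>x. x \<in> {a<..<b} \<Longrightarrow> x \<notin> N \<Longrightarrow> ((\<lambda>t. integral {a..t} v) has_real_derivative v x) (at x)"
proof -
  define v' where "v' x = (if x \<in> {a..b} then v x else 0)" for x
  have "v' integrable_on UNIV" unfolding v'_def using int integrable_restrict_UNIV by blast
  then have v'i: "v' integrable_on {c..d}" for c d by (rule integrable_on_subinterval) auto
  define w where "w = (\<lambda>x. v' (-x))"
  have wi: "w integrable_on {c..d}" for c d
  proof -
    have "(\<lambda>x. v' (- x)) integrable_on {c..d}"
      using Henstock_Kurzweil_Integration.integrable_reflect_real[where f=v' and a="-d" and b="-c"] v'i[of "-d" "-c"] by simp
    then show ?thesis by (simp add: w_def)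
  qed
  obtain N1 where N1: "negligible N1"
    "\<And>x e. x \<notin> N1 \<Longrightarrow> 0 < e \<Longrightarrow> \<exists>d>0. \<forall>h. 0 < h \<and> h < d \<longrightarrow> \<bar>integral {x..x+h} v' / h - v' x\<bar> < e"
    using right_avg[OF v'i] by metis
  obtain N2 where N2: "negligible N2"
    "\<And>x e. x \<notin> N2 \<Longrightarrow> 0 < e \<Longrightarrow> \<exists>d>0. \<forall>h. 0 < h \<and> h < d \<longrightarrow> \<bar>integral {x..x+h} w / h - w x\<bar> < e"
    using right_avg[OF wi] by metis
  have N2': "negligible (uminus ` N2)"
    by (rule negligible_differentiable_image_negligible[OF order_refl N2(1)]) (auto intro!: derivative_intros)
  show ?thesis
  proof (rule that[OF negligible_Un[OF N1(1) N2']])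
    fix x assume x: "x \<in> {a<..<b}" "x \<notin> N1 \<union> uminus ` N2"
    then have xN2: "-x \<notin> N2" by (metis UnI2 image_eqI minus_minus)
    show "((\<lambda>t. integral {a..t} v) has_real_derivative v x) (at x)"
      unfolding DERIV_def LIM_eq real_norm_def
    proof (intro allI impI)
      fix e :: real assume e: "e > 0"
      obtain d1 where d1: "d1 > 0" "\<And>h. 0 < h \<and> h < d1 \<Longrightarrow> \<bar>integral {x..x+h} v' / h - v' x\<bar> < e"
        using N1(2)[of x e] x e by auto
      obtain d2 where d2: "d2 > 0" "\<And>h. 0 < h \<and> h < d2 \<Longrightarrow> \<bar>integral {-x..-x+h} w / h - w (-x)\<bar> < e"
        using N2(2)[OF xN2 e] by auto
      have vx: "v' x = v x" "w (-x) = v x" using x by (auto simp: v'_def w_def)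
      show "\<exists>s>0. \<forall>h. h \<noteq> 0 \<and> \<bar>h - 0\<bar> < s \<longrightarrow> \<bar>(integral {a..x + h} v - integral {a..x} v) / h - v x\<bar> < e"
      proof (intro exI[of _ "min (min d1 d2) (min (b - x) (x - a))"] conjI allI impI)
        show "0 < min (min d1 d2) (min (b - x) (x - a))" using d1 d2 x by auto
        fix h assume h: "h \<noteq> 0 \<and> \<bar>h - 0\<bar> < min (min d1 d2) (min (b - x) (x - a))"
        show "\<bar>(integral {a..x + h} v - integral {a..x} v) / h - v x\<bar> < e"
        proof (cases "h > 0")
          case True
          have "integral {a..x} v + integral {x..x+h} v = integral {a..x+h} v"
            using x h True by (intro Henstock_Kurzweil_Integration.integral_combine integrable_subinterval_real[OF int]) auto
          moreover have "integral {x..x+h} v = integral {x..x+h} v'"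
            using x h by (intro integral_cong) (auto simp: v'_def)
          ultimately have "integral {a..x+h} v - integral {a..x} v = integral {x..x+h} v'" by simp
          then show ?thesis using d1(2)[of h] h True vx by simp
        next
          case False
          then have hn: "h < 0" using h by auto
          have "integral {a..x+h} v + integral {x+h..x} v = integral {a..x} v"
            using x h hn by (intro Henstock_Kurzweil_Integration.integral_combine integrable_subinterval_real[OF int]) auto
          moreover have "integral {x+h..x} v = integral {x+h..x} v'"
            using x h hn by (intro integral_cong) (auto simp: v'_def)
          moreover have "integral {-x..-x+(-h)} w = integral {x+h..x} v'"
          proof -
            have "integral {-x..-x+(-h)} w = integral {- x .. - (x+h)} (\<lambda>y. v' (- y))"
              by (simp add: w_def)
            also have "\<dots> = integral {x+h..x} v'" by (rule Henstock_Kurzweil_Integration.integral_reflect_real)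
            finally show ?thesis .
          qed
          moreover have "\<bar>integral {-x..-x+(-h)} w / (-h) - w (-x)\<bar> < e" using d2(2)[of "-h"] h hn by auto
          ultimately have "integral {a..x+h} v - integral {a..x} v = - integral {-x..-x+(-h)} w" by simp
          then have "(integral {a..x+h} v - integral {a..x} v) / h = integral {-x..-x+(-h)} w / (-h)"
            by simp
          then show ?thesis using \<open>\<bar>integral {-x..-x+(-h)} w / (-h) - w (-x)\<bar> < e\<close> vx by simp
        qed
      qed
    qed
  qed
qed



definition play_hk :: "real \<Rightarrow> real \<Rightarrow> (real \<Rightarrow> real) \<Rightarrow> (real \<Rightarrow> real) \<Rightarrow> (real \<Rightarrow> real) \<Rightarrow> real set \<Rightarrow> bool" where
  "play_hk T r q \<xi> v N \<longleftrightarrow> v integrable_on {0..T} \<and> (\<lambda>x. \<bar>v x\<bar>) integrable_on {0..T} \<and>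
     (\<forall>t\<in>{0..T}. \<xi> t = \<xi> 0 + integral {0..t} v) \<and> (\<forall>t\<in>{0..T}. \<bar>q t - \<xi> t\<bar> \<le> r) \<and> negligible N \<and>
     (\<forall>t\<in>{0<..<T}. t \<notin> N \<longrightarrow> (\<exists>d. (\<xi> has_real_derivative d) (at t) \<and> (\<forall>z. \<bar>z\<bar> \<le> 1 \<longrightarrow> d * (q t - \<xi> t - r * z) \<ge> 0))) \<and>
     \<xi> 0 = max (q 0 - r) (min 0 (q 0 + r))"

lemma W11_HK:
  fixes u :: "real \<Rightarrow> real"
  assumes "W11 T u"
  obtains v where "v integrable_on {0..T}" "(\<lambda>x. \<bar>v x\<bar>) integrable_on {0..T}"
    "\<And>t. t \<in> {0..T} \<Longrightarrow> u t = u 0 + integral {0..t} v"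
proof -
  obtain v where v: "set_integrable lborel {0..T} v" "\<forall>t\<in>{0..T}. u t = u 0 + (LINT s:{0..t}|lborel. v s)"
    using assms unfolding W11_def by blast
  have "v integrable_on {0..T}" using set_borel_integral_eq_integral(1)[OF v(1)] .
  moreover have "(\<lambda>x. \<bar>v x\<bar>) integrable_on {0..T}"
    using set_borel_integral_eq_integral(1)[OF set_integrable_norm[OF v(1)]] by simp
  moreover have "u t = u 0 + integral {0..t} v" if "t \<in> {0..T}" for t
  proof -
    have "set_integrable lborel {0..t} v" using that by (intro set_integrable_subset[OF v(1)]) auto
    from set_borel_integral_eq_integral(2)[OF this]
    have e2: "(LINT s:{0..t}|lborel. v s) = integral {0..t} v" .
    have e1: "u t = u 0 + (LINT s:{0..t}|lborel. v s)" using v(2) that by blast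
    show ?thesis using e1 e2 by linarith
  qed
  ultimately show ?thesis by (rule that)
qed

lemma indef_cont:
  fixes u v :: "real \<Rightarrow> real"
  assumes "v integrable_on {0..T}" "\<And>t. t \<in> {0..T} \<Longrightarrow> u t = u 0 + integral {0..t} v"
  shows "continuous_on {0..T} u"
proof -
  have "continuous_on {0..T} (\<lambda>t. u 0 + integral {0..t} v)"
    using indefinite_integral_continuous_1[OF assms(1)] by (intro continuous_intros)
  then show ?thesis
  proof (rule continuous_on_eq)
    fix x assume "x \<in> {0..T}"
    from assms(2)[OF this] show "u 0 + integral {0..x} v = u x" by simp
  qed
qed

lemma W11_cont: fixes u :: "real \<Rightarrow> real" assumes "W11 T u" shows "continuous_on {0..T} u"
proof -
  obtain v where "v integrable_on {0..T}" "\<And>t. t \<in> {0..T} \<Longrightarrow> u t = u 0 + integral {0..t} v"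
    using W11_HK[OF assms] by blast
  then show ?thesis by (rule indef_cont)
qed

lemma W11_diff:
  fixes u :: "real \<Rightarrow> real"
  assumes "W11 T u"
  obtains N where "negligible N" "\<And>t. t \<in> {0<..<T} \<Longrightarrow> t \<notin> N \<Longrightarrow> u differentiable (at t)"
proof -
  obtain v where v: "v integrable_on {0..T}" "\<And>t. t \<in> {0..T} \<Longrightarrow> u t = u 0 + integral {0..t} v"
    using W11_HK[OF assms] by blast
  obtain N where N: "negligible N" "\<And>x. x \<in> {0<..<T} \<Longrightarrow> x \<notin> N \<Longrightarrow> ((\<lambda>t. integral {0..t} v) has_real_derivative v x) (at x)"
    using ldt[OF v(1)] by blast
  show ?thesis
  proof (rule that[OF N(1)])
    fix t assume t: "t \<in> {0<..<T}" "t \<notin> N"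
    have "((\<lambda>s. u 0 + integral {0..s} v) has_real_derivative v t) (at t)"
      using N(2)[OF t] by (auto intro!: derivative_eq_intros)
    then have "(u has_real_derivative v t) (at t)"
    proof (rule has_field_derivative_transform_within_open[where S="{0<..<T}"])
      fix x assume "x \<in> {0<..<T}"
      then have "x \<in> {0..T}" by auto
      from v(2)[OF this] show "u 0 + integral {0..x} v = u x" by simp
    qed (use t in auto)
    then show "u differentiable (at t)" using real_differentiable_def by blast
  qed
qed

lemma play_hk_exists:
  assumes "play_solution T r q \<xi>"
  shows "\<exists>v N. play_hk T r q \<xi> v N"
proof -
  define P where "P t = (t \<in> {0<..<T} \<longrightarrow>
        (\<exists>d. (\<xi> has_real_derivative d) (at t) \<and> (\<forall>z. \<bar>z\<bar> \<le> 1 \<longrightarrow> d * (q t - \<xi> t - r * z) \<ge> 0)))" for t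
  have W: "W11 T \<xi>" and b: "\<forall>t\<in>{0..T}. \<bar>q t - \<xi> t\<bar> \<le> r"
    and ae: "AE t in lborel. P t"
    and i: "\<xi> 0 = max (q 0 - r) (min 0 (q 0 + r))"
    using assms unfolding play_solution_def P_def by auto
  obtain v where v: "v integrable_on {0..T}" "(\<lambda>x. \<bar>v x\<bar>) integrable_on {0..T}"
    "\<And>t. t \<in> {0..T} \<Longrightarrow> \<xi> t = \<xi> 0 + integral {0..t} v" using W11_HK[OF W] by blast
  from ae obtain N where N: "{t \<in> space lborel. \<not> P t} \<subseteq> N" "N \<in> sets lborel" "emeasure lborel N = 0"
    by (rule AE_E)
  have "N \<in> null_sets lborel" using N(2,3) by auto
  then have negN: "negligible N" by (simp add: negligible_iff_null_sets null_sets_completionI)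
  have good: "\<forall>t\<in>{0<..<T}. t \<notin> N \<longrightarrow> (\<exists>d. (\<xi> has_real_derivative d) (at t) \<and> (\<forall>z. \<bar>z\<bar> \<le> 1 \<longrightarrow> d * (q t - \<xi> t - r * z) \<ge> 0))"
  proof (intro ballI impI)
    fix t assume "t \<in> {0<..<T}" "t \<notin> N"
    then have "P t" using N(1) by auto
    then show "\<exists>d. (\<xi> has_real_derivative d) (at t) \<and> (\<forall>z. \<bar>z\<bar> \<le> 1 \<longrightarrow> d * (q t - \<xi> t - r * z) \<ge> 0)"
      using \<open>t \<in> {0<..<T}\<close> by (simp add: P_def)
  qed
  have "play_hk T r q \<xi> v N" unfolding play_hk_def
    using v(1,2) v(3) b negN good i by blast
  then show ?thesis by blast
qed

lemma play_hkD:
  assumes "play_hk T r q \<xi> v N"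
  shows "v integrable_on {0..T}" "(\<lambda>x. \<bar>v x\<bar>) integrable_on {0..T}"
    "\<And>t. t \<in> {0..T} \<Longrightarrow> \<xi> t = \<xi> 0 + integral {0..t} v"
    "\<And>t. t \<in> {0..T} \<Longrightarrow> \<bar>q t - \<xi> t\<bar> \<le> r" "negligible N"
    "\<And>t. t \<in> {0<..<T} \<Longrightarrow> t \<notin> N \<Longrightarrow> \<exists>d. (\<xi> has_real_derivative d) (at t) \<and> (\<forall>z. \<bar>z\<bar> \<le> 1 \<longrightarrow> d * (q t - \<xi> t - r * z) \<ge> 0)"
    "\<xi> 0 = max (q 0 - r) (min 0 (q 0 + r))"
  using assms unfolding play_hk_def by blast+

lemma play_cont:
  assumes "play_hk T r q \<xi> v N"
  shows "continuous_on {0..T} \<xi>"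
  using play_hkD(1,3)[OF assms] by (rule indef_cont)

lemma play_incr:
  assumes P: "play_hk T r q \<xi> v N" and xy: "0 \<le> x" "x \<le> y" "y \<le> T"
  shows "\<xi> y - \<xi> x = integral {x..y} v" "\<bar>\<xi> y - \<xi> x\<bar> \<le> integral {x..y} (\<lambda>s. \<bar>v s\<bar>)"
proof -
  have vi: "v integrable_on {0..y}" using xy by (intro integrable_subinterval_real[OF play_hkD(1)[OF P]]) auto
  have "integral {0..x} v + integral {x..y} v = integral {0..y} v"
    using xy by (intro Henstock_Kurzweil_Integration.integral_combine[OF _ _ vi]) auto
  moreover have "\<xi> y = \<xi> 0 + integral {0..y} v" using xy by (intro play_hkD(3)[OF P]) auto
  moreover have "\<xi> x = \<xi> 0 + integral {0..x} v" using xy by (intro play_hkD(3)[OF P]) auto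
  ultimately show e: "\<xi> y - \<xi> x = integral {x..y} v" by linarith
  have "norm (integral {x..y} v) \<le> integral {x..y} (\<lambda>s. \<bar>v s\<bar>)"
    by (rule integral_norm_bound_integral)
       (use xy in \<open>auto intro: integrable_subinterval_real[OF play_hkD(1)[OF P]] integrable_subinterval_real[OF play_hkD(2)[OF P]]\<close>)
  then show "\<bar>\<xi> y - \<xi> x\<bar> \<le> integral {x..y} (\<lambda>s. \<bar>v s\<bar>)" using e by simp
qed

lemma play_nonincr:
  assumes P: "play_hk T r q \<xi> v N" and ab: "0 \<le> \<alpha>" "\<alpha> \<le> \<beta>" "\<beta> \<le> T"
    and lt: "\<And>u. u \<in> {\<alpha><..<\<beta>} \<Longrightarrow> q u - \<xi> u < r"
  shows "\<xi> \<beta> \<le> \<xi> \<alpha>"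
proof -
  have "(\<lambda>x. - \<xi> x) \<alpha> \<le> (\<lambda>x. - \<xi> x) \<beta>"
  proof (rule mono_ae[OF ab(2) _ _ _ _ play_hkD(5)[OF P], where \<phi>="\<lambda>s. \<bar>v s\<bar>"])
    show "continuous_on {\<alpha>..\<beta>} (\<lambda>x. - \<xi> x)"
      using ab by (intro continuous_intros continuous_on_subset[OF play_cont[OF P]]) auto
    show "(\<lambda>s. \<bar>v s\<bar>) integrable_on {\<alpha>..\<beta>}"
      using ab by (intro integrable_subinterval_real[OF play_hkD(2)[OF P]]) auto
    show "0 \<le> \<bar>v x\<bar>" for x by simp
    fix x y assume "\<alpha> \<le> x" "x \<le> y" "y \<le> \<beta>"
    then show "- \<xi> x - - \<xi> y \<le> integral {x..y} (\<lambda>s. \<bar>v s\<bar>)"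
      using play_incr(2)[OF P, of x y] ab by auto
  next
    fix z assume z: "z \<in> {\<alpha><..<\<beta>}" "z \<notin> N"
    then have z0: "z \<in> {0<..<T}" using ab by auto
    obtain d where d: "(\<xi> has_real_derivative d) (at z)" "\<And>w. \<bar>w\<bar> \<le> 1 \<Longrightarrow> d * (q z - \<xi> z - r * w) \<ge> 0"
      using play_hkD(6)[OF P z0 z(2)] by blast
    have "d * (q z - \<xi> z - r) \<ge> 0" using d(2)[of 1] by simp
    moreover have "q z - \<xi> z - r < 0" using lt[OF z(1)] by simp
    ultimately have "d \<le> 0" by (simp add: mult_le_0_iff zero_le_mult_iff)
    moreover have "((\<lambda>x. - \<xi> x) has_real_derivative - d) (at z)" using d(1) by (rule DERIV_minus)
    ultimately show "\<exists>d\<ge>0. ((\<lambda>x. - \<xi> x) has_real_derivative d) (at z)" by (intro exI[of _ "-d"]) auto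
  qed
  then show ?thesis by simp
qed

lemma play_nondecr:
  assumes P: "play_hk T r q \<xi> v N" and ab: "0 \<le> \<alpha>" "\<alpha> \<le> \<beta>" "\<beta> \<le> T"
    and gt: "\<And>u. u \<in> {\<alpha><..<\<beta>} \<Longrightarrow> q u - \<xi> u > - r"
  shows "\<xi> \<alpha> \<le> \<xi> \<beta>"
proof (rule mono_ae[OF ab(2) _ _ _ _ play_hkD(5)[OF P], where \<phi>="\<lambda>s. \<bar>v s\<bar>"])
  show "continuous_on {\<alpha>..\<beta>} \<xi>"
    using ab by (intro continuous_on_subset[OF play_cont[OF P]]) auto
  show "(\<lambda>s. \<bar>v s\<bar>) integrable_on {\<alpha>..\<beta>}"
    using ab by (intro integrable_subinterval_real[OF play_hkD(2)[OF P]]) auto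
  show "0 \<le> \<bar>v x\<bar>" for x by simp
  fix x y assume "\<alpha> \<le> x" "x \<le> y" "y \<le> \<beta>"
  then show "\<xi> x - \<xi> y \<le> integral {x..y} (\<lambda>s. \<bar>v s\<bar>)"
    using play_incr(2)[OF P, of x y] ab by auto
next
  fix z assume z: "z \<in> {\<alpha><..<\<beta>}" "z \<notin> N"
  then have z0: "z \<in> {0<..<T}" using ab by auto
  obtain d where d: "(\<xi> has_real_derivative d) (at z)" "\<And>w. \<bar>w\<bar> \<le> 1 \<Longrightarrow> d * (q z - \<xi> z - r * w) \<ge> 0"
    using play_hkD(6)[OF P z0 z(2)] by blast
  have "d * (q z - \<xi> z + r) \<ge> 0" using d(2)[of "-1"] by simp
  moreover have "q z - \<xi> z + r > 0" using gt[OF z(1)] by simp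
  ultimately have "d \<ge> 0" by (simp add: zero_le_mult_iff)
  then show "\<exists>d\<ge>0. (\<xi> has_real_derivative d) (at z)" using d(1) by blast
qed



lemma play_sign:
  assumes P: "play_hk T r q \<xi> v N" and r: "r > 0" and qc: "continuous_on {0..T} q"
    and t: "t \<in> {0<..<T}" and d: "(\<xi> has_real_derivative d) (at t)"
  shows "d * (q t - \<xi> t) \<ge> 0"
proof -
  define c where "c = q t - \<xi> t"
  have wc: "continuous_on {0..T} (\<lambda>u. q u - \<xi> u)" by (intro continuous_intros qc play_cont[OF P])
  have t0: "t \<in> {0..T}" using t by auto
  consider "c > 0" | "c < 0" | "c = 0" by linarith
  then show ?thesis
  proof cases
    case 1
    obtain \<delta> where \<delta>: "\<delta> > 0" "\<And>u. u \<in> {0..T} \<Longrightarrow> dist u t < \<delta> \<Longrightarrow> dist (q u - \<xi> u) (q t - \<xi> t) < c"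
      using wc t0 1 unfolding continuous_on_iff by metis
    have "d \<ge> 0"
    proof (rule ccontr)
      assume "\<not> d \<ge> 0"
      then obtain d' where d': "d' > 0" "\<And>h. h > 0 \<Longrightarrow> h < d' \<Longrightarrow> \<xi> t > \<xi> (t + h)"
        using DERIV_neg_dec_right[OF d] by force
      define h where "h = min (min d' \<delta>) (T - t) / 2"
      have h: "h > 0" "h < d'" "h < \<delta>" "t + h < T" using d' \<delta> t unfolding h_def by (auto simp: min_def field_simps)
      have "\<xi> t \<le> \<xi> (t + h)"
      proof (rule play_nondecr[OF P])
        fix u assume u: "u \<in> {t<..<t + h}"
        then have "u \<in> {0..T}" "dist u t < \<delta>" using t h by (auto simp: dist_real_def)
        from \<delta>(2)[OF this] have "q u - \<xi> u > 0" by (simp add: c_def dist_real_def)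
        then show "q u - \<xi> u > - r" using r by linarith
      qed (use t h in auto)
      then show False using d'(2)[OF h(1,2)] by simp
    qed
    then show ?thesis using 1 by (simp add: c_def)
  next
    case 2
    obtain \<delta> where \<delta>: "\<delta> > 0" "\<And>u. u \<in> {0..T} \<Longrightarrow> dist u t < \<delta> \<Longrightarrow> dist (q u - \<xi> u) (q t - \<xi> t) < - c"
      using wc t0 2 unfolding continuous_on_iff by (metis neg_0_less_iff_less)
    have "d \<le> 0"
    proof (rule ccontr)
      assume "\<not> d \<le> 0"
      then obtain d' where d': "d' > 0" "\<And>h. h > 0 \<Longrightarrow> h < d' \<Longrightarrow> \<xi> t < \<xi> (t + h)"
        using DERIV_pos_inc_right[OF d] by force
      define h where "h = min (min d' \<delta>) (T - t) / 2"
      have h: "h > 0" "h < d'" "h < \<delta>" "t + h < T" using d' \<delta> t unfolding h_def by (auto simp: min_def field_simps)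
      have "\<xi> (t + h) \<le> \<xi> t"
      proof (rule play_nonincr[OF P])
        fix u assume u: "u \<in> {t<..<t + h}"
        then have "u \<in> {0..T}" "dist u t < \<delta>" using t h by (auto simp: dist_real_def)
        from \<delta>(2)[OF this] have "q u - \<xi> u < 0" by (simp add: c_def dist_real_def)
        then show "q u - \<xi> u < r" using r by linarith
      qed (use t h in auto)
      then show False using d'(2)[OF h(1,2)] by simp
    qed
    then show ?thesis using 2 by (simp add: c_def mult_nonpos_nonpos)
  next
    case 3
    then show ?thesis by (simp add: c_def)
  qed
qed

lemma play_bound:
  assumes P: "play_hk T r q \<xi> v N" and ts: "0 \<le> t" "t \<le> s" "s \<le> T"
    and K: "\<And>u. u \<in> {t..s} \<Longrightarrow> \<bar>q u - q t\<bar> \<le> K"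
  shows "\<bar>\<xi> s - \<xi> t\<bar> \<le> K"
proof -
  have K0: "K \<ge> 0" using K[of t] ts by auto
  have qt: "\<bar>q t - \<xi> t\<bar> \<le> r" using ts by (intro play_hkD(4)[OF P]) auto
  have cont: "continuous_on {t..s} \<xi>" using ts by (intro continuous_on_subset[OF play_cont[OF P]]) auto
  have up: "\<xi> s \<le> max (\<xi> t) (q t + K - r)"
  proof (rule barrier[OF ts(2) cont])
    show "\<xi> t \<le> max (\<xi> t) (q t + K - r)" by simp
    fix t0 u assume a: "t \<le> t0" "t0 < u" "u \<le> s" "\<xi> t0 \<le> max (\<xi> t) (q t + K - r)"
      "\<forall>x\<in>{t0<..u}. max (\<xi> t) (q t + K - r) < \<xi> x"
    show "\<xi> u \<le> \<xi> t0"
    proof (rule play_nonincr[OF P])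
      fix x assume x: "x \<in> {t0<..<u}"
      then have "max (\<xi> t) (q t + K - r) < \<xi> x" using a(5) by auto
      moreover have "\<bar>q x - q t\<bar> \<le> K" using x a by (intro K) auto
      ultimately show "q x - \<xi> x < r" by linarith
    qed (use a ts in auto)
  qed
  have lo: "- \<xi> s \<le> max (- \<xi> t) (- (q t - K + r))"
  proof (rule barrier[OF ts(2), where w="\<lambda>x. - \<xi> x"])
    show "continuous_on {t..s} (\<lambda>x. - \<xi> x)" by (intro continuous_intros cont)
    show "- \<xi> t \<le> max (- \<xi> t) (- (q t - K + r))" by simp
    fix t0 u assume a: "t \<le> t0" "t0 < u" "u \<le> s" "- \<xi> t0 \<le> max (- \<xi> t) (- (q t - K + r))"
      "\<forall>x\<in>{t0<..u}. max (- \<xi> t) (- (q t - K + r)) < - \<xi> x"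
    have "\<xi> t0 \<le> \<xi> u"
    proof (rule play_nondecr[OF P])
      fix x assume x: "x \<in> {t0<..<u}"
      then have "max (- \<xi> t) (- (q t - K + r)) < - \<xi> x" using a(5) by auto
      moreover have "\<bar>q x - q t\<bar> \<le> K" using x a by (intro K) auto
      ultimately show "q x - \<xi> x > - r" by linarith
    qed (use a ts in auto)
    then show "- \<xi> u \<le> - \<xi> t0" by simp
  qed
  show ?thesis using up lo qt K0 by (auto simp: max_def abs_le_iff split: if_splits)
qed

lemma play_lip_r1:
  assumes P1: "play_hk T r1 q \<xi>1 v1 N1" and P2: "play_hk T r2 q \<xi>2 v2 N2"
    and r: "r1 > 0" "r2 > 0" and t: "t \<in> {0..T}"
  shows "\<xi>1 t - \<xi>2 t \<le> \<bar>r1 - r2\<bar>"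
proof (rule barrier[where w="\<lambda>x. \<xi>1 x - \<xi>2 x"])
  show "0 \<le> t" using t by auto
  show "continuous_on {0..t} (\<lambda>x. \<xi>1 x - \<xi>2 x)"
    using t by (intro continuous_intros continuous_on_subset[OF play_cont[OF P1]]
        continuous_on_subset[OF play_cont[OF P2]]) auto
  have "\<xi>1 0 = max (q 0 - r1) (min 0 (q 0 + r1))" "\<xi>2 0 = max (q 0 - r2) (min 0 (q 0 + r2))"
    using play_hkD(7)[OF P1] play_hkD(7)[OF P2] by auto
  then show "\<xi>1 0 - \<xi>2 0 \<le> \<bar>r1 - r2\<bar>" using r by (simp add: max_def min_def abs_if)
  fix t0 u assume a: "0 \<le> t0" "t0 < u" "u \<le> t" "\<xi>1 t0 - \<xi>2 t0 \<le> \<bar>r1 - r2\<bar>"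
    "\<forall>x\<in>{t0<..u}. \<bar>r1 - r2\<bar> < \<xi>1 x - \<xi>2 x"
  have 1: "\<xi>1 u \<le> \<xi>1 t0"
  proof (rule play_nonincr[OF P1])
    fix x assume x: "x \<in> {t0<..<u}"
    then have "\<bar>r1 - r2\<bar> < \<xi>1 x - \<xi>2 x" using a(5) by auto
    moreover have "\<bar>q x - \<xi>2 x\<bar> \<le> r2" using x a t by (intro play_hkD(4)[OF P2]) auto
    ultimately show "q x - \<xi>1 x < r1" by (simp add: abs_le_iff abs_if split: if_splits)
  qed (use a t in auto)
  have 2: "\<xi>2 t0 \<le> \<xi>2 u"
  proof (rule play_nondecr[OF P2])
    fix x assume x: "x \<in> {t0<..<u}"
    then have "\<bar>r1 - r2\<bar> < \<xi>1 x - \<xi>2 x" using a(5) by auto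
    moreover have "\<bar>q x - \<xi>1 x\<bar> \<le> r1" using x a t by (intro play_hkD(4)[OF P1]) auto
    ultimately show "q x - \<xi>2 x > - r2" by (simp add: abs_le_iff abs_if split: if_splits)
  qed (use a t in auto)
  show "\<xi>1 u - \<xi>2 u \<le> \<xi>1 t0 - \<xi>2 t0" using 1 2 by simp
qed

lemma play_lip_r:
  assumes P1: "play_hk T r1 q \<xi>1 v1 N1" and P2: "play_hk T r2 q \<xi>2 v2 N2"
    and r: "r1 > 0" "r2 > 0" and t: "t \<in> {0..T}"
  shows "\<bar>\<xi>1 t - \<xi>2 t\<bar> \<le> \<bar>r1 - r2\<bar>"
  using play_lip_r1[OF P1 P2 r t] play_lip_r1[OF P2 P1 r(2,1) t] by (simp add: abs_le_iff abs_minus_commute)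



definition CQ :: "(real \<Rightarrow> real) \<Rightarrow> real \<Rightarrow> bool" where
 "CQ f t \<longleftrightarrow> (\<forall>k::nat. \<exists>m::nat. \<forall>p::rat. \<forall>p'::rat.
    (0 < \<bar>real_of_rat p\<bar> \<and> \<bar>real_of_rat p\<bar> < 1 / Suc m \<and> 0 < \<bar>real_of_rat p'\<bar> \<and> \<bar>real_of_rat p'\<bar> < 1 / Suc m) \<longrightarrow>
    \<bar>(f (t + real_of_rat p) - f t) / real_of_rat p - (f (t + real_of_rat p') - f t) / real_of_rat p'\<bar> \<le> 1 / Suc k)"

lemma abs_close:
  fixes a b d e :: real
  shows "\<bar>a - d\<bar> < e \<Longrightarrow> \<bar>b - d\<bar> < e \<Longrightarrow> \<bar>a - b\<bar> < 2 * e"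
  by (auto simp: abs_less_iff)

lemma diff_imp_CQ:
  fixes f :: "real \<Rightarrow> real"
  assumes d: "(f has_real_derivative d) (at t)"
  shows "CQ f t"
  unfolding CQ_def
proof
  fix k :: nat
  have e: "1 / (2 * Suc k) > (0::real)" by simp
  obtain s where s: "s > 0" "\<And>h. h \<noteq> 0 \<and> \<bar>h\<bar> < s \<Longrightarrow> \<bar>(f (t + h) - f t) / h - d\<bar> < 1 / (2 * Suc k)"
    using deriv_eps[OF d e] by blast
  obtain m :: nat where m: "1 / Suc m < s" using nat_approx_posE[OF s(1)] by blast
  show "\<exists>m::nat. \<forall>p::rat. \<forall>p'::rat.
    (0 < \<bar>real_of_rat p\<bar> \<and> \<bar>real_of_rat p\<bar> < 1 / Suc m \<and> 0 < \<bar>real_of_rat p'\<bar> \<and> \<bar>real_of_rat p'\<bar> < 1 / Suc m) \<longrightarrow>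
    \<bar>(f (t + real_of_rat p) - f t) / real_of_rat p - (f (t + real_of_rat p') - f t) / real_of_rat p'\<bar> \<le> 1 / Suc k"
  proof (intro exI[of _ m] allI impI)
    fix p p' :: rat
    assume a: "0 < \<bar>real_of_rat p\<bar> \<and> \<bar>real_of_rat p\<bar> < 1 / Suc m \<and> 0 < \<bar>real_of_rat p'\<bar> \<and> \<bar>real_of_rat p'\<bar> < 1 / Suc m"
    have 1: "\<bar>(f (t + real_of_rat p) - f t) / real_of_rat p - d\<bar> < 1 / (2 * Suc k)"
      using a m by (intro s(2)) auto
    have 2: "\<bar>(f (t + real_of_rat p') - f t) / real_of_rat p' - d\<bar> < 1 / (2 * Suc k)"
      using a m by (intro s(2)) auto
    have e2: "2 * (1 / (2 * Suc k)) = (1::real) / Suc k" by (simp add: field_simps)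
    show "\<bar>(f (t + real_of_rat p) - f t) / real_of_rat p - (f (t + real_of_rat p') - f t) / real_of_rat p'\<bar> \<le> 1 / Suc k"
      using abs_close[OF 1 2] e2 by (metis less_imp_le)
  qed
qed

lemma CQ_imp_diff:
  fixes f :: "real \<Rightarrow> real"
  assumes cont: "\<And>x. \<bar>x - t\<bar> < \<delta>0 \<Longrightarrow> isCont f x" and \<delta>0: "\<delta>0 > 0" and C: "CQ f t"
  shows "\<exists>d. (f has_real_derivative d) (at t)"
proof -
  define Q where "Q h = (f (t + h) - f t) / h" for h
  have C': "\<exists>m::nat. \<forall>p p'. p \<in> \<rat> \<longrightarrow> p' \<in> \<rat> \<longrightarrow> 0 < \<bar>p\<bar> \<longrightarrow> \<bar>p\<bar> < 1 / Suc m \<longrightarrow> 0 < \<bar>p'\<bar> \<longrightarrow> \<bar>p'\<bar> < 1 / Suc m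
      \<longrightarrow> \<bar>Q p - Q p'\<bar> \<le> 1 / Suc k" for k
  proof -
    obtain m :: nat where m: "\<forall>p::rat. \<forall>p'::rat.
    (0 < \<bar>real_of_rat p\<bar> \<and> \<bar>real_of_rat p\<bar> < 1 / Suc m \<and> 0 < \<bar>real_of_rat p'\<bar> \<and> \<bar>real_of_rat p'\<bar> < 1 / Suc m) \<longrightarrow>
    \<bar>(f (t + real_of_rat p) - f t) / real_of_rat p - (f (t + real_of_rat p') - f t) / real_of_rat p'\<bar> \<le> 1 / Suc k"
      using C unfolding CQ_def by blast
    show ?thesis
    proof (intro exI[of _ m] allI impI)
      fix p p' :: real assume a: "p \<in> \<rat>" "p' \<in> \<rat>" "0 < \<bar>p\<bar>" "\<bar>p\<bar> < 1 / Suc m" "0 < \<bar>p'\<bar>" "\<bar>p'\<bar> < 1 / Suc m"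
      from a(1) obtain a1 where a1: "p = real_of_rat a1" by (rule Rats_cases)
      from a(2) obtain a2 where a2: "p' = real_of_rat a2" by (rule Rats_cases)
      show "\<bar>Q p - Q p'\<bar> \<le> 1 / Suc k" using m[rule_format, of a1 a2] a unfolding a1 a2 Q_def by blast
    qed
  qed
  define a where "a n = Q (1 / Suc n)" for n
  have rat: "1 / real (Suc n) \<in> \<rat>" for n by simp
  have "Cauchy a"
  proof (rule CauchyI)
    fix e :: real assume "e > 0"
    then obtain k :: nat where k: "1 / Suc k < e" using nat_approx_posE by blast
    obtain m where m: "\<forall>p p'. p \<in> \<rat> \<longrightarrow> p' \<in> \<rat> \<longrightarrow> 0 < \<bar>p\<bar> \<longrightarrow> \<bar>p\<bar> < 1 / Suc m \<longrightarrow> 0 < \<bar>p'\<bar> \<longrightarrow> \<bar>p'\<bar> < 1 / Suc m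
      \<longrightarrow> \<bar>Q p - Q p'\<bar> \<le> 1 / Suc k" using C' by blast
    have lt: "1 / real (Suc n) < 1 / Suc m" if "n \<ge> Suc m" for n
      using that by (simp add: frac_less2)
    show "\<exists>M. \<forall>m\<ge>M. \<forall>n\<ge>M. norm (a m - a n) < e"
    proof (intro exI[of _ "Suc m"] allI impI)
      fix n1 n2 assume "n1 \<ge> Suc m" "n2 \<ge> Suc m"
      then have "\<bar>a n1 - a n2\<bar> \<le> 1 / Suc k"
        unfolding a_def using m rat lt by simp
      then show "norm (a n1 - a n2) < e" using k by simp
    qed
  qed
  then obtain d where ad: "a \<longlonglongrightarrow> d" using Cauchy_convergent_iff convergent_def by blast
  have "Q \<midarrow>0\<rightarrow> d"
    unfolding LIM_eq
  proof (intro allI impI)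
    fix e :: real assume "e > 0"
    then obtain k :: nat where k: "1 / Suc k < e" using nat_approx_posE by blast
    obtain m where m: "\<forall>p p'. p \<in> \<rat> \<longrightarrow> p' \<in> \<rat> \<longrightarrow> 0 < \<bar>p\<bar> \<longrightarrow> \<bar>p\<bar> < 1 / Suc m \<longrightarrow> 0 < \<bar>p'\<bar> \<longrightarrow> \<bar>p'\<bar> < 1 / Suc m
      \<longrightarrow> \<bar>Q p - Q p'\<bar> \<le> 1 / Suc k" using C' by blast
    show "\<exists>s>0. \<forall>h. h \<noteq> 0 \<and> norm (h - 0) < s \<longrightarrow> norm (Q h - d) < e"
    proof (intro exI[of _ "min \<delta>0 (1 / Suc m)"] conjI allI impI)
      show "0 < min \<delta>0 (1 / Suc m)" using \<delta>0 by simp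
      fix h :: real assume h: "h \<noteq> 0 \<and> norm (h - 0) < min \<delta>0 (1 / Suc m)"
      have hc: "isCont Q h"
      proof -
        have "isCont f (t + h)" using h by (intro cont) auto
        moreover have "isCont (\<lambda>x. t + x) h" by simp
        ultimately have "isCont (\<lambda>x. f (t + x)) h" using isCont_o2[where f="\<lambda>x. t + x" and a=h and g=f] by simp
        then show ?thesis unfolding Q_def[abs_def] using h by (intro continuous_intros) auto
      qed
      have bnd: "\<bar>Q h - a n\<bar> \<le> 1 / Suc k" if n: "n \<ge> Suc m" for n
      proof (rule field_le_epsilon)
        fix \<eta> :: real assume \<eta>: "\<eta> > 0"
        obtain \<rho>1 where \<rho>1: "\<rho>1 > 0" "\<And>x. x \<noteq> h \<and> norm (x - h) < \<rho>1 \<Longrightarrow> norm (Q x - Q h) < \<eta>"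
          using hc \<eta> unfolding isCont_def LIM_eq by blast
        define \<rho> where "\<rho> = min \<rho>1 (min \<bar>h\<bar> (1 / Suc m - \<bar>h\<bar>))"
        have \<rho>: "\<rho> > 0" using \<rho>1 h by (auto simp: \<rho>_def)
        obtain p where p: "p \<in> \<rat>" "h - \<rho> < p" "p < h + \<rho>" using Rats_dense_in_real[of "h - \<rho>" "h + \<rho>"] \<rho> by auto
        have pp: "0 < \<bar>p\<bar>" "\<bar>p\<bar> < 1 / Suc m" "\<bar>p - h\<bar> < \<rho>1"
          using p h by (auto simp: \<rho>_def abs_if split: if_splits)
        have 1: "\<bar>Q p - Q h\<bar> \<le> \<eta>"
        proof (cases "p = h")
          case False then show ?thesis using \<rho>1(2)[of p] pp \<eta> by fastforce
        qed (use \<eta> in simp)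
        have r3: "\<bar>1 / real (Suc n)\<bar> < 1 / Suc m" using n by (simp add: frac_less2)
        have 2: "\<bar>Q p - a n\<bar> \<le> 1 / Suc k"
          unfolding a_def by (rule m[rule_format, OF p(1) rat pp(1,2) _ r3]) simp
        show "\<bar>Q h - a n\<bar> \<le> 1 / Suc k + \<eta>" using 1 2 by linarith
      qed
      have "(\<lambda>n. \<bar>Q h - a n\<bar>) \<longlonglongrightarrow> \<bar>Q h - d\<bar>" by (intro tendsto_intros ad)
      then have "\<bar>Q h - d\<bar> \<le> 1 / Suc k" by (rule LIMSEQ_le_const2) (use bnd in blast)
      then show "norm (Q h - d) < e" using k by simp
    qed
  qed
  then show ?thesis unfolding DERIV_def Q_def[abs_def] by blast
qed



lemma floor_approx: "(\<lambda>n. real_of_int \<lfloor>real (Suc n) * x\<rfloor> / real (Suc n)) \<longlonglongrightarrow> x"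
proof (rule tendsto_sandwich[of "\<lambda>n. x - inverse (real (Suc n))" _ _ "\<lambda>n. x"])
  show "\<forall>\<^sub>F n in sequentially. x - inverse (real (Suc n)) \<le> real_of_int \<lfloor>real (Suc n) * x\<rfloor> / real (Suc n)"
  proof (intro always_eventually allI)
    fix n
    have "real (Suc n) * x - 1 \<le> real_of_int \<lfloor>real (Suc n) * x\<rfloor>" by linarith
    then have "(real (Suc n) * x - 1) / real (Suc n) \<le> real_of_int \<lfloor>real (Suc n) * x\<rfloor> / real (Suc n)"
      by (rule divide_right_mono) simp
    moreover have "(real (Suc n) * x - 1) / real (Suc n) = x - inverse (real (Suc n))"
      by (simp add: field_simps)
    ultimately show "x - inverse (real (Suc n)) \<le> real_of_int \<lfloor>real (Suc n) * x\<rfloor> / real (Suc n)"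
      by simp
  qed
  show "\<forall>\<^sub>F n in sequentially. real_of_int \<lfloor>real (Suc n) * x\<rfloor> / real (Suc n) \<le> x"
  proof (intro always_eventually allI)
    fix n
    have "real_of_int \<lfloor>real (Suc n) * x\<rfloor> \<le> real (Suc n) * x" by linarith
    then have "real_of_int \<lfloor>real (Suc n) * x\<rfloor> / real (Suc n) \<le> (real (Suc n) * x) / real (Suc n)"
      by (rule divide_right_mono) simp
    then show "real_of_int \<lfloor>real (Suc n) * x\<rfloor> / real (Suc n) \<le> x" by simp
  qed
  show "(\<lambda>n. x - inverse (real (Suc n))) \<longlonglongrightarrow> x"
    using tendsto_diff[OF tendsto_const LIMSEQ_inverse_real_of_nat, of x] by simp
qed simp

lemma cara_meas:
  fixes h :: "'a \<Rightarrow> real \<Rightarrow> real"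
  assumes hm: "\<And>v. (\<lambda>m. h m v) \<in> borel_measurable M" and hc: "\<And>m. continuous_on UNIV (h m)"
    and x: "x \<in> borel_measurable M"
  shows "(\<lambda>m. h m (x m)) \<in> borel_measurable M"
proof (rule borel_measurable_LIMSEQ_real[where u="\<lambda>n m. h m (real_of_int \<lfloor>real (Suc n) * x m\<rfloor> / real (Suc n))"])
  fix m
  have "isCont (h m) (x m)" using hc[of m] by (simp add: continuous_on_eq_continuous_at)
  then show "(\<lambda>n. h m (real_of_int \<lfloor>real (Suc n) * x m\<rfloor> / real (Suc n))) \<longlonglongrightarrow> h m (x m)"
    by (rule isCont_tendsto_compose) (rule floor_approx)
next
  fix n
  have fl: "(\<lambda>m. \<lfloor>real (Suc n) * x m\<rfloor>) \<in> measurable M (count_space UNIV)"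
    using x by measurable
  show "(\<lambda>m. h m (real_of_int \<lfloor>real (Suc n) * x m\<rfloor> / real (Suc n))) \<in> borel_measurable M"
    using measurable_compose_countable[where f="\<lambda>(k::int) m. h m (real_of_int k / real (Suc n))", OF _ fl] hm
    by simp
qed

lemma shift_meas:
  fixes X :: "real \<Rightarrow> real \<Rightarrow> real"
  assumes "(\<lambda>p. X (fst p) (snd p)) \<in> borel_measurable borel"
  shows "(\<lambda>p. X (fst p) (snd p + c)) \<in> borel_measurable borel"
proof -
  have "(\<lambda>p::real\<times>real. (fst p, snd p + c)) \<in> borel_measurable borel"
    by (intro borel_measurable_continuous_onI continuous_intros)
  from measurable_compose[OF this assms] show ?thesis by simp
qed

lemma CQ_set_meas:
  fixes X :: "real \<Rightarrow> real \<Rightarrow> real"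
  assumes Xm: "(\<lambda>p. X (fst p) (snd p)) \<in> borel_measurable borel"
  shows "{p :: real \<times> real. CQ (X (fst p)) (snd p)} \<in> sets borel"
proof -
  note [measurable] = shift_meas[OF Xm] Xm
  have "Measurable.pred borel (\<lambda>p::real\<times>real. CQ (X (fst p)) (snd p))"
    unfolding CQ_def by measurable
  then show ?thesis by (simp add: pred_def)
qed

lemma AE_swap_borel:
  fixes P :: "real \<Rightarrow> real \<Rightarrow> bool"
  assumes m: "{p::real\<times>real. P (fst p) (snd p)} \<in> sets borel" and ae: "\<And>r. AE t in lborel. P r t"
  shows "AE t in lborel. AE r in lborel. P r t"
proof -
  have "{x \<in> space (lborel \<Otimes>\<^sub>M lborel). P (fst x) (snd x)} \<in> sets (lborel \<Otimes>\<^sub>M lborel)"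
    unfolding lborel_prod using m by simp
  from lborel_pair.AE_commute[OF this] ae show ?thesis by simp
qed

lemma xi_joint_cont:
  fixes xi :: "real \<Rightarrow> real \<Rightarrow> real"
  assumes plays: "\<And>r. r > 0 \<Longrightarrow> \<exists>v N. play_hk T r q (xi r) v N"
  shows "continuous_on ({0<..} \<times> {0..T}) (\<lambda>p. xi (fst p) (snd p))"
  unfolding continuous_on_iff
proof (intro ballI allI impI)
  fix p0 :: "real \<times> real" and e :: real
  assume p0: "p0 \<in> {0<..} \<times> {0..T}" and e: "e > 0"
  obtain r0 t0 where rt0: "p0 = (r0, t0)" "r0 > 0" "t0 \<in> {0..T}" using p0 by auto
  obtain v0 N0 where P0: "play_hk T r0 q (xi r0) v0 N0" using plays[OF rt0(2)] by blast
  have e2: "e / 2 > 0" using e by simp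
  obtain d1 where d1: "d1 > 0" "\<And>t. t \<in> {0..T} \<Longrightarrow> dist t t0 < d1 \<Longrightarrow> dist (xi r0 t) (xi r0 t0) < e / 2"
    using play_cont[OF P0] rt0(3) e2 unfolding continuous_on_iff by metis
  show "\<exists>d>0. \<forall>x'\<in>{0<..} \<times> {0..T}. dist x' p0 < d \<longrightarrow> dist (xi (fst x') (snd x')) (xi (fst p0) (snd p0)) < e"
  proof (intro exI[of _ "min d1 (e/2)"] conjI ballI impI)
    show "0 < min d1 (e / 2)" using d1 e by simp
    fix p assume p: "p \<in> {0<..} \<times> {0..T}" "dist p p0 < min d1 (e / 2)"
    obtain r t where rt: "p = (r, t)" "r > 0" "t \<in> {0..T}" using p(1) by auto
    obtain v N where P: "play_hk T r q (xi r) v N" using plays[OF rt(2)] by blast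
    have "dist r r0 < e / 2" "dist t t0 < d1"
      using dist_fst_le[of p p0] dist_snd_le[of p p0] p(2) rt rt0 by auto
    then have 1: "\<bar>r - r0\<bar> < e / 2" and 2: "dist (xi r0 t) (xi r0 t0) < e / 2"
      using d1(2)[OF rt(3)] by (auto simp: dist_real_def)
    have 3: "\<bar>xi r t - xi r0 t\<bar> \<le> \<bar>r - r0\<bar>" by (rule play_lip_r[OF P P0 rt(2) rt0(2) rt(3)])
    have 4: "\<bar>xi r t - xi r0 t0\<bar> \<le> \<bar>xi r t - xi r0 t\<bar> + \<bar>xi r0 t - xi r0 t0\<bar>"
      using abs_triangle_ineq[of "xi r t - xi r0 t" "xi r0 t - xi r0 t0"] by simp
    show "dist (xi (fst p) (snd p)) (xi (fst p0) (snd p0)) < e"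
      using 1 2 3 4 rt rt0 by (simp add: dist_real_def)
  qed
qed

lemma xi_joint_meas:
  fixes xi :: "real \<Rightarrow> real \<Rightarrow> real"
  assumes plays: "\<And>r. r > 0 \<Longrightarrow> \<exists>v N. play_hk T r q (xi r) v N"
  shows "(\<lambda>p. if 0 < fst p \<and> snd p \<in> {0..T} then xi (fst p) (snd p) else 0) \<in> borel_measurable borel"
proof -
  define A :: "(real \<times> real) set" where "A = ({0<..} \<times> UNIV) \<inter> (UNIV \<times> {0..T})"
  have A: "A = {0<..} \<times> {0..T}" by (auto simp: A_def)
  have "A \<in> sets borel" unfolding A_def
    by (intro sets.Int borel_open borel_closed open_Times closed_Times) auto
  moreover have "continuous_on A (\<lambda>p. xi (fst p) (snd p))" unfolding A by (rule xi_joint_cont[OF plays])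
  moreover have "continuous_on (- A) (\<lambda>p. 0::real)" by simp
  ultimately have "(\<lambda>p. if p \<in> A then xi (fst p) (snd p) else 0) \<in> borel_measurable borel"
    by (rule borel_measurable_continuous_on_if)
  moreover have "(\<lambda>p. if p \<in> A then xi (fst p) (snd p) else 0) = (\<lambda>p. if 0 < fst p \<and> snd p \<in> {0..T} then xi (fst p) (snd p) else 0)"
    by (auto simp: A mem_Times_iff)
  ultimately show ?thesis by simp
qed



lemma deriv_seq:
  fixes F :: "real \<Rightarrow> real"
  assumes "(F has_real_derivative d) (at t)" "\<And>i. X i \<noteq> 0" "X \<longlonglongrightarrow> 0"
  shows "(\<lambda>i. (F (t + X i) - F t) / X i) \<longlonglongrightarrow> d"
proof -
  have "(\<lambda>h. (F (t + h) - F t) / h) \<midarrow>0\<rightarrow> d" using assms(1) by (simp add: DERIV_def)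
  then have "((\<lambda>h. (F (t + h) - F t) / h) \<circ> X) \<longlonglongrightarrow> d"
    using assms(2,3) unfolding tendsto_at_iff_sequentially by blast
  then show ?thesis by (simp add: comp_def)
qed

lemma quot_meas:
  fixes f g :: "'a \<Rightarrow> real"
  shows "f \<in> borel_measurable M \<Longrightarrow> g \<in> borel_measurable M \<Longrightarrow> (\<lambda>x. (f x - g x) / c) \<in> borel_measurable M"
  by (intro borel_measurable_divide borel_measurable_diff borel_measurable_const)

lemma DQ:
  fixes \<Phi> :: "real \<Rightarrow> real \<Rightarrow> real" and W :: "real \<Rightarrow> real"
  assumes \<delta>: "\<delta> > 0"
    and meas: "\<And>s. \<bar>s - t\<bar> < \<delta> \<Longrightarrow> (\<lambda>r. \<Phi> r s) \<in> borel_measurable lborel"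
    and intW: "integrable lborel W"
    and int0: "integrable lborel (\<lambda>r. \<Phi> r t)"
    and lip: "\<And>r s. \<bar>s - t\<bar> < \<delta> \<Longrightarrow> \<bar>\<Phi> r s - \<Phi> r t\<bar> \<le> W r * \<bar>s - t\<bar>"
    and diff: "AE r in lborel. \<exists>d. (\<Phi> r has_real_derivative d) (at t)"
  shows "\<exists>Df. Df \<in> borel_measurable lborel \<and> integrable lborel Df \<and>
      (AE r in lborel. (\<Phi> r has_real_derivative Df r) (at t)) \<and>
      ((\<lambda>s. \<integral>r. \<Phi> r s \<partial>lborel) has_real_derivative (\<integral>r. Df r \<partial>lborel)) (at t)"
proof -
  have W0: "W r \<ge> 0" for r
  proof -
    have "\<bar>\<Phi> r (t + \<delta>/2) - \<Phi> r t\<bar> \<le> W r * \<bar>(t + \<delta>/2) - t\<bar>" using \<delta> by (intro lip) auto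
    then have "0 \<le> W r * \<bar>(t + \<delta>/2) - t\<bar>" by (rule order_trans[OF abs_ge_zero])
    moreover have "\<bar>(t + \<delta>/2) - t\<bar> = \<delta>/2" using \<delta> by simp
    ultimately have "0 \<le> W r * (\<delta>/2)" by simp
    then show ?thesis using \<delta> by (simp add: zero_le_mult_iff)
  qed
  define hs where "hs n = \<delta> / (real n + 2)" for n
  have hs: "hs n \<noteq> 0" "\<bar>hs n\<bar> < \<delta>" for n
  proof -
    have p: "real n + 2 > 1" by simp
    show "hs n \<noteq> 0" using \<delta> by (simp add: hs_def)
    have "\<delta> / (real n + 2) < \<delta> / 1" using \<delta> p by (intro divide_strict_left_mono) auto
    then show "\<bar>hs n\<bar> < \<delta>" using \<delta> by (simp add: hs_def)
  qed
  have "LIM n sequentially. (2 + real n) :> at_top"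
    by (rule filterlim_tendsto_add_at_top[OF tendsto_const filterlim_real_sequentially])
  then have "LIM n sequentially. (real n + 2) :> at_infinity"
    by (simp add: add.commute filterlim_at_top_imp_at_infinity)
  then have hs0: "hs \<longlonglongrightarrow> 0" unfolding hs_def
    by (intro tendsto_divide_0[OF tendsto_const])
  define Df where "Df r = lim (\<lambda>n. (\<Phi> r (t + hs n) - \<Phi> r t) / hs n)" for r
  have m0: "(\<lambda>r. \<Phi> r t) \<in> borel_measurable lborel" using \<delta> by (intro meas) auto
  have qm: "(\<lambda>r. (\<Phi> r (t + hs n) - \<Phi> r t) / hs n) \<in> borel_measurable lborel" for n
    using hs[of n] by (intro quot_meas m0 meas) auto
  have Dfm: "Df \<in> borel_measurable lborel" unfolding Df_def by (rule borel_measurable_lim_metric[OF qm])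
  have DfAE: "AE r in lborel. (\<Phi> r has_real_derivative Df r) (at t)"
    using diff
  proof eventually_elim
    case (elim r)
    then obtain d where d: "(\<Phi> r has_real_derivative d) (at t)" by blast
    have "(\<lambda>n. (\<Phi> r (t + hs n) - \<Phi> r t) / hs n) \<longlonglongrightarrow> d" by (rule deriv_seq[OF d hs(1) hs0])
    then have "Df r = d" unfolding Df_def by (rule limI)
    then show ?case using d by simp
  qed
  have intS: "integrable lborel (\<lambda>r. \<Phi> r s)" if s: "\<bar>s - t\<bar> < \<delta>" for s
  proof (rule Bochner_Integration.integrable_bound[where f="\<lambda>r. \<bar>\<Phi> r t\<bar> + W r * \<delta>"])
    show "integrable lborel (\<lambda>r. \<bar>\<Phi> r t\<bar> + W r * \<delta>)" using int0 intW by auto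
    show "(\<lambda>r. \<Phi> r s) \<in> borel_measurable lborel" using s by (rule meas)
    show "AE r in lborel. norm (\<Phi> r s) \<le> norm (\<bar>\<Phi> r t\<bar> + W r * \<delta>)"
    proof (intro AE_I2)
      fix r
      have "\<bar>\<Phi> r s - \<Phi> r t\<bar> \<le> W r * \<bar>s - t\<bar>" using s by (rule lip)
      also have "\<dots> \<le> W r * \<delta>" using s W0[of r] by (intro mult_left_mono) auto
      finally show "norm (\<Phi> r s) \<le> norm (\<bar>\<Phi> r t\<bar> + W r * \<delta>)" using W0[of r] \<delta> by simp
    qed
  qed
  have main: "(\<lambda>h. ((\<integral>r. \<Phi> r (t + h) \<partial>lborel) - (\<integral>r. \<Phi> r t \<partial>lborel)) / h) \<midarrow>0\<rightarrow> (\<integral>r. Df r \<partial>lborel)"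
    unfolding tendsto_at_iff_sequentially comp_def
  proof (intro allI impI)
    fix X :: "nat \<Rightarrow> real" assume X: "\<forall>i. X i \<in> UNIV - {0}" "X \<longlonglongrightarrow> 0"
    then obtain N where N: "\<And>n. n \<ge> N \<Longrightarrow> \<bar>X n\<bar> < \<delta>" using \<delta> unfolding LIMSEQ_iff by force
    define Y where "Y n = X (n + N)" for n
    have Y: "Y n \<noteq> 0" "\<bar>Y n\<bar> < \<delta>" for n using X(1) N[of "n + N"] by (auto simp: Y_def)
    have Y0: "Y \<longlonglongrightarrow> 0" unfolding Y_def using X(2) by (rule LIMSEQ_ignore_initial_segment)
    define s where "s n r = (\<Phi> r (t + Y n) - \<Phi> r t) / Y n" for n r
    have sm: "s n \<in> borel_measurable lborel" for n
      unfolding s_def using Y[of n] by (intro quot_meas m0 meas) auto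
    have slim: "AE r in lborel. (\<lambda>n. s n r) \<longlonglongrightarrow> Df r"
      using DfAE
    proof eventually_elim
      case (elim r)
      show ?case unfolding s_def by (rule deriv_seq[OF elim Y(1) Y0])
    qed
    have sb: "AE r in lborel. norm (s n r) \<le> W r" for n
    proof (intro AE_I2)
      fix r
      have "\<bar>\<Phi> r (t + Y n) - \<Phi> r t\<bar> \<le> W r * \<bar>(t + Y n) - t\<bar>" using Y[of n] by (intro lip) auto
      then show "norm (s n r) \<le> W r" using Y[of n] by (simp add: s_def divide_le_eq abs_divide)
    qed
    have conv: "(\<lambda>n. \<integral>r. s n r \<partial>lborel) \<longlonglongrightarrow> (\<integral>r. Df r \<partial>lborel)"
      by (rule integral_dominated_convergence[OF Dfm sm intW slim sb])
    have eq: "(\<integral>r. s n r \<partial>lborel) = ((\<integral>r. \<Phi> r (t + Y n) \<partial>lborel) - (\<integral>r. \<Phi> r t \<partial>lborel)) / Y n" for n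
    proof -
      have "(\<integral>r. s n r \<partial>lborel) = (\<integral>r. (\<Phi> r (t + Y n) - \<Phi> r t) \<partial>lborel) / Y n"
        unfolding s_def by (rule integral_divide_zero)
      also have "\<dots> = ((\<integral>r. \<Phi> r (t + Y n) \<partial>lborel) - (\<integral>r. \<Phi> r t \<partial>lborel)) / Y n"
        using intS[of "t + Y n"] int0 Y[of n] by simp
      finally show ?thesis .
    qed
    have "(\<lambda>n. ((\<integral>r. \<Phi> r (t + X (n + N)) \<partial>lborel) - (\<integral>r. \<Phi> r t \<partial>lborel)) / X (n + N)) \<longlonglongrightarrow> (\<integral>r. Df r \<partial>lborel)"
      using conv unfolding eq Y_def .
    then show "(\<lambda>n. ((\<integral>r. \<Phi> r (t + X n) \<partial>lborel) - (\<integral>r. \<Phi> r t \<partial>lborel)) / X n) \<longlonglongrightarrow> (\<integral>r. Df r \<partial>lborel)"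
      by (rule LIMSEQ_offset)
  qed
  have "integrable lborel Df"
  proof (rule integrable_dominated_convergence[OF Dfm qm intW])
    show "AE r in lborel. (\<lambda>n. (\<Phi> r (t + hs n) - \<Phi> r t) / hs n) \<longlonglongrightarrow> Df r"
      using DfAE
    proof eventually_elim
      case (elim r)
      show ?case by (rule deriv_seq[OF elim hs(1) hs0])
    qed
    fix n
    show "AE r in lborel. norm ((\<Phi> r (t + hs n) - \<Phi> r t) / hs n) \<le> W r"
    proof (intro AE_I2)
      fix r
      have "\<bar>\<Phi> r (t + hs n) - \<Phi> r t\<bar> \<le> W r * \<bar>(t + hs n) - t\<bar>" using hs[of n] by (intro lip) auto
      then show "norm ((\<Phi> r (t + hs n) - \<Phi> r t) / hs n) \<le> W r" using hs[of n] by (simp add: divide_le_eq abs_divide)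
    qed
  qed
  show ?thesis
    using Dfm DfAE main \<open>integrable lborel Df\<close> unfolding DERIV_def by blast
qed



lemma deriv_lip:
  fixes F :: "real \<Rightarrow> real"
  assumes d: "\<And>v. (F has_real_derivative F' v) (at v)" and b: "\<And>v. \<bar>F' v\<bar> \<le> M"
  shows "\<bar>F a - F b\<bar> \<le> M * \<bar>a - b\<bar>"
proof -
  have *: "\<bar>F y - F x\<bar> \<le> M * (y - x)" if xy: "x < y" for x y
  proof -
    obtain z where "F y - F x = (y - x) * F' z" using MVT2[OF xy, of F F'] d by blast
    then have "\<bar>F y - F x\<bar> = (y - x) * \<bar>F' z\<bar>" using xy by (simp add: abs_mult)
    also have "\<dots> \<le> (y - x) * M" using xy b[of z] by (intro mult_left_mono) auto
    finally show ?thesis by (simp add: mult.commute)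
  qed
  consider "a < b" | "a = b" | "b < a" by linarith
  then show ?thesis
  proof cases
    case 1 then show ?thesis using *[OF 1] by (simp add: abs_minus_commute)
  next
    case 2 then show ?thesis by simp
  next
    case 3 then show ?thesis using *[OF 3] by simp
  qed
qed

lemma deriv_meas:
  fixes F :: "real \<Rightarrow> real"
  assumes d: "\<And>v. (F has_real_derivative F' v) (at v)"
  shows "F' \<in> borel_measurable borel"
proof (rule borel_measurable_LIMSEQ_real[where u="\<lambda>n v. (F (v + 1 / Suc n) - F v) / (1 / Suc n)"])
  fix v
  have "(\<lambda>n. (F (v + 1 / Suc n) - F v) / (1 / Suc n)) \<longlonglongrightarrow> F' v"
    by (rule deriv_seq[OF d]) (use LIMSEQ_inverse_real_of_nat in \<open>auto simp: inverse_eq_divide\<close>)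
  then show "(\<lambda>n. (F (v + 1 / Suc n) - F v) / (1 / Suc n)) \<longlonglongrightarrow> F' v" .
next
  fix n
  have c: "continuous_on UNIV F" using d by (meson DERIV_isCont continuous_at_imp_continuous_on)
  show "(\<lambda>v. (F (v + 1 / Suc n) - F v) / (1 / Suc n)) \<in> borel_measurable borel"
    by (intro borel_measurable_continuous_onI continuous_intros continuous_on_compose2[OF c]) auto
qed

lemma Gamma_deriv:
  fixes gr :: "real \<Rightarrow> real"
  assumes c: "continuous_on UNIV gr"
  shows "((\<lambda>u. LBINT y=0..u. gr y) has_real_derivative gr v) (at v)"
proof -
  have c1: "continuous_on {- \<bar>v\<bar> - 1..\<bar>v\<bar> + 1} gr" by (rule continuous_on_subset[OF c]) simp
  have a: "- \<bar>v\<bar> - 1 \<le> 0" "0 \<le> \<bar>v\<bar> + 1" "- \<bar>v\<bar> - 1 \<le> v" "v \<le> \<bar>v\<bar> + 1" by linarith+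
  have "((\<lambda>u. LBINT y=ereal 0..u. gr y) has_vector_derivative gr v) (at v within {- \<bar>v\<bar> - 1..\<bar>v\<bar> + 1})"
    by (rule interval_integral_FTC2[OF a(1,2) c1 a(3,4)])
  then have 1: "((\<lambda>u. LBINT y=0..u. gr y) has_vector_derivative gr v) (at v within {- \<bar>v\<bar> - 1..\<bar>v\<bar> + 1})"
    unfolding zero_ereal_def .
  have "v \<in> interior {- \<bar>v\<bar> - 1..\<bar>v\<bar> + 1}" unfolding interior_atLeastAtMost_real
    using abs_ge_self[of v] abs_ge_minus_self[of v] by auto
  then have "at v within {- \<bar>v\<bar> - 1..\<bar>v\<bar> + 1} = at v" by (rule at_within_interior)
  with 1 have "((\<lambda>u. LBINT y=0..u. gr y) has_vector_derivative gr v) (at v)" by simp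
  then show ?thesis by (simp add: has_real_derivative_iff_has_vector_derivative)
qed

lemma Gpot_H:
  fixes gr dgr :: "real \<Rightarrow> real"
  assumes gd: "\<And>v. (gr has_real_derivative dgr v) (at v)" and b: "\<And>v. \<bar>dgr v\<bar> \<le> M"
  shows "(LBINT x=0..v. x * dgr x) = v * gr v - (LBINT x=0..v. gr x)"
    and "((\<lambda>v. LBINT x=0..v. x * dgr x) has_real_derivative v * dgr v) (at v)"
proof -
  have c: "continuous_on UNIV gr" using gd by (meson DERIV_isCont continuous_at_imp_continuous_on)
  define H where "H v = v * gr v - (LBINT x=0..v. gr x)" for v
  have Hd: "(H has_real_derivative v * dgr v) (at v)" for v
  proof -
    have "((\<lambda>v. v * gr v - (LBINT x=0..v. gr x)) has_real_derivative (v * dgr v + 1 * gr v - gr v)) (at v)"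
      by (rule DERIV_diff[OF DERIV_mult'[OF DERIV_ident gd] Gamma_deriv[OF c]])
    then show ?thesis unfolding H_def[abs_def] by simp
  qed
  have dm: "dgr \<in> borel_measurable borel" by (rule deriv_meas[OF gd])
  have intg: "set_integrable lborel {a..b} (\<lambda>x. x * dgr x)" for a b :: real
    unfolding set_integrable_def
  proof (rule integrableI_bounded_set[where A="{a..b}" and B="(\<bar>a\<bar> + \<bar>b\<bar>) * M"])
    show "(\<lambda>x. indicator {a..b} x *\<^sub>R (x * dgr x)) \<in> borel_measurable lborel" using dm by measurable
    show "AE x in lborel. x \<in> {a..b} \<longrightarrow> norm (indicator {a..b} x *\<^sub>R (x * dgr x)) \<le> (\<bar>a\<bar> + \<bar>b\<bar>) * M"
    proof (intro AE_I2 impI)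
      fix x assume x: "x \<in> {a..b}"
      have "\<bar>x\<bar> * \<bar>dgr x\<bar> \<le> (\<bar>a\<bar> + \<bar>b\<bar>) * M" using x b[of x] by (intro mult_mono) auto
      then show "norm (indicator {a..b} x *\<^sub>R (x * dgr x)) \<le> (\<bar>a\<bar> + \<bar>b\<bar>) * M" using x by (simp add: abs_mult)
    qed
  qed (auto simp: emeasure_lborel_Icc_eq)
  have ftc: "(LBINT x=a..b. x * dgr x) = H b - H a" if ab: "a \<le> b" for a b :: real
  proof -
    have "((\<lambda>x. x * dgr x) has_integral (H b - H a)) {a..b}"
    proof (rule fundamental_theorem_of_calculus[OF ab])
      fix x assume "x \<in> {a..b}"
      have "(H has_vector_derivative x * dgr x) (at x)" using Hd[of x] by (simp add: has_real_derivative_iff_has_vector_derivative)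
      then show "(H has_vector_derivative x * dgr x) (at x within {a..b})" by (rule has_vector_derivative_at_within)
    qed
    then have "integral {a..b} (\<lambda>x. x * dgr x) = H b - H a" by (rule integral_unique)
    moreover have "(LBINT x=a..b. x * dgr x) = integral {a..b} (\<lambda>x. x * dgr x)"
      by (rule interval_integral_eq_integral[OF ab intg])
    ultimately show ?thesis by simp
  qed
  have H0: "H 0 = 0" by (simp add: H_def zero_ereal_def[symmetric])
  have eq: "(LBINT x=0..v. x * dgr x) = H v" for v
  proof (cases "0 \<le> v")
    case True then show ?thesis using ftc[OF True] H0 by (simp add: zero_ereal_def[symmetric])
  next
    case False
    then have "(LBINT x=v..0. x * dgr x) = H 0 - H v" using ftc[of v 0] by (simp add: zero_ereal_def[symmetric])
    then show ?thesis using H0 by (subst interval_integral_endpoints_reverse) (simp add: zero_ereal_def[symmetric])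
  qed
  show "(LBINT x=0..v. x * dgr x) = v * gr v - (LBINT x=0..v. gr x)" using eq by (simp add: H_def)
  have "(\<lambda>v. LBINT x=0..v. x * dgr x) = H" using eq by (rule ext)
  then show "((\<lambda>v. LBINT x=0..v. x * dgr x) has_real_derivative v * dgr v) (at v)" using Hd by simp
qed



lemma LBINT_meas:
  fixes F :: "real \<Rightarrow> real \<Rightarrow> real"
  assumes Fm: "(\<lambda>p. F (fst p) (snd p)) \<in> borel_measurable borel"
  shows "(\<lambda>r. LBINT x=a..b. F r x) \<in> borel_measurable borel"
proof -
  have m: "(\<lambda>r. \<integral>x. indicator A x *\<^sub>R F r x \<partial>lborel) \<in> borel_measurable borel" if A: "A \<in> sets borel" for A
  proof -
    have sndm: "(snd :: real \<times> real \<Rightarrow> real) \<in> borel_measurable borel"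
      by (intro borel_measurable_continuous_onI continuous_intros)
    have im: "(\<lambda>p::real\<times>real. indicator A (snd p) :: real) \<in> borel_measurable borel"
      using measurable_compose[OF sndm borel_measurable_indicator[OF A]] by (simp add: comp_def)
    have "(\<lambda>p::real\<times>real. indicator A (snd p) *\<^sub>R F (fst p) (snd p)) \<in> borel_measurable borel"
      by (rule borel_measurable_scaleR[OF im Fm])
    then have "(\<lambda>p. indicator A (snd p) *\<^sub>R F (fst p) (snd p)) \<in> borel_measurable (lborel \<Otimes>\<^sub>M lborel)"
      unfolding lborel_prod by simp
    then have "(\<lambda>r. \<integral>x. indicator A x *\<^sub>R F r x \<partial>lborel) \<in> borel_measurable lborel"
      using lborel.borel_measurable_lebesgue_integral[of "\<lambda>r x. indicator A x *\<^sub>R F r x" lborel] by simp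
    then show ?thesis by simp
  qed
  show ?thesis
    unfolding interval_lebesgue_integral_def set_lebesgue_integral_def
    using m[OF borel_einterval[of a b]] m[OF borel_einterval[of b a]] by (cases "a \<le> b") simp_all
qed

lemma gt_joint:
  fixes g :: "real \<Rightarrow> real \<Rightarrow> real"
  assumes gm: "\<And>v. set_borel_measurable lborel {0<..} (\<lambda>r. g r v)"
    and gc: "\<And>r. r > 0 \<Longrightarrow> continuous_on UNIV (g r)"
  shows "(\<lambda>p::real\<times>real. indicator {0<..} (fst p) * g (fst p) (snd p)) \<in> borel_measurable borel"
proof -
  have fstm: "(fst :: real \<times> real \<Rightarrow> real) \<in> borel_measurable borel"
    by (intro borel_measurable_continuous_onI continuous_intros)
  have sndm: "(snd :: real \<times> real \<Rightarrow> real) \<in> borel_measurable borel"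
    by (intro borel_measurable_continuous_onI continuous_intros)
  have h1: "(\<lambda>r. indicator {0<..} r * g r v) \<in> borel_measurable borel" for v
    using gm[of v] unfolding set_borel_measurable_def by simp
  have hm: "(\<lambda>p::real\<times>real. indicator {0<..} (fst p) * g (fst p) v) \<in> borel_measurable borel" for v
    using measurable_compose[OF fstm h1[of v]] by (simp add: comp_def)
  have hc: "continuous_on UNIV (\<lambda>v. indicator {0<..} (fst p) * g (fst p) v)" for p :: "real \<times> real"
  proof (cases "fst p > 0")
    case True then show ?thesis by (intro continuous_intros gc)
  next
    case False then show ?thesis by simp
  qed
  show ?thesis by (rule cara_meas[OF hm hc sndm])
qed

lemma clamp_abs: "r > 0 \<Longrightarrow> \<bar>max (a - r) (min 0 (a + r))\<bar> \<le> \<bar>(a::real)\<bar>"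
  by (simp add: max_def min_def abs_if)

lemma lin_bound:
  fixes F :: "real \<Rightarrow> real"
  assumes d: "\<And>v. (F has_real_derivative F' v) (at v)" and b: "\<And>v. \<bar>F' v\<bar> \<le> M" and F0: "F 0 = 0"
  shows "\<bar>F v\<bar> \<le> M * \<bar>v\<bar>"
  using deriv_lip[OF d b, of v 0] F0 by simp



lemma X_diff:
  assumes P: "play_hk T r q \<xi> v N" and r: "r > 0" and t: "t \<in> {0<..<T}"
    and C: "CQ (\<lambda>s. if 0 < r \<and> s \<in> {0..T} then \<xi> s else 0) t"
  shows "\<exists>d. (\<xi> has_real_derivative d) (at t)"
proof -
  define Y where "Y s = (if 0 < r \<and> s \<in> {0..T} then \<xi> s else 0)" for s
  have Yeq: "Y s = \<xi> s" if "s \<in> {0<..<T}" for s using that r by (simp add: Y_def)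
  have "continuous_on {0<..<T} \<xi>" by (rule continuous_on_subset[OF play_cont[OF P]]) auto
  then have "continuous_on {0<..<T} Y" by (rule continuous_on_eq) (simp add: Yeq)
  then have Yc: "isCont Y x" if "x \<in> {0<..<T}" for x
    using that by (simp add: continuous_on_eq_continuous_at)
  have Yc': "isCont Y x" if "\<bar>x - t\<bar> < min t (T - t)" for x
  proof -
    from that have "x \<in> {0<..<T}" by auto
    then show "isCont Y x" by (rule Yc)
  qed
  have mpos: "0 < min t (T - t)" using t by auto
  have CY: "CQ Y t" using C unfolding Y_def[abs_def] .
  have "\<exists>d. (Y has_real_derivative d) (at t)" by (rule CQ_imp_diff[OF Yc' mpos CY])
  then obtain d where "(Y has_real_derivative d) (at t)" by blast
  then have "(\<xi> has_real_derivative d) (at t)"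
    by (rule has_field_derivative_transform_within_open[where S="{0<..<T}"]) (use t Yeq in auto)
  then show ?thesis by blast
qed

lemma pointwise:
  fixes T c \<kappa> e :: real and f f' \<mu> \<mu>1 \<epsilon> E :: "real \<Rightarrow> real"
    and g dg xi :: "real \<Rightarrow> real \<Rightarrow> real"
  assumes T: "T > 0"
    and g0: "\<forall>r>0. g r 0 = 0"
    and g_deriv: "\<forall>r>0. \<forall>v. (g r has_real_derivative dg r v) (at v)"
    and dg_bound: "\<forall>r>0. \<forall>v. 0 \<le> dg r v \<and> dg r v \<le> \<mu> r"
    and dg_bound1: "\<forall>r>0. \<forall>v. \<bar>v\<bar> * dg r v \<le> \<mu>1 r"
    and mu_int: "set_integrable lborel {0<..} \<mu>"
    and mu1_int: "set_integrable lborel {0<..} \<mu>1"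
    and g_meas: "\<forall>v. set_borel_measurable lborel {0<..} (\<lambda>r. g r v)"
    and c: "c > 0" and kappa: "\<kappa> > 0"
    and f_deriv: "\<forall>x. (f has_real_derivative f' x) (at x)"
    and f_pos: "\<forall>x. f x > 0"
    and epsc: "continuous_on {0..T} \<epsilon>" and Ec: "continuous_on {0..T} E"
    and plays: "\<And>r. r > 0 \<Longrightarrow> \<exists>v N. play_hk T r (\<lambda>t. E t / f (\<epsilon> t)) (xi r) v N"
    and t: "t \<in> {0<..<T}"
    and epsd: "(\<epsilon> has_real_derivative d\<epsilon>) (at t)" and Ed: "(E has_real_derivative dE) (at t)"
    and aeCQ: "AE r in lborel. r > 0 \<longrightarrow> CQ (\<lambda>s. if 0 < r \<and> s \<in> {0..T} then xi r s else 0) t"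
  shows "\<exists>d\<epsilon> dD dF.
       (\<epsilon> has_real_derivative d\<epsilon>) (at t) \<and>
       ((\<lambda>s. e * \<epsilon> s + \<kappa> * E s + preisach g xi s) has_real_derivative dD) (at t) \<and>
       ((\<lambda>s. c / 2 * (\<epsilon> s)\<^sup>2 + \<kappa> / 2 * (E s)\<^sup>2 + f (\<epsilon> s) * potential dg xi s)
          has_real_derivative dF) (at t) \<and>
       d\<epsilon> * (c * \<epsilon> t - e * E t + f' (\<epsilon> t) * potential dg xi t) + dD * E t - dF \<ge> 0"
proof -
  define q where "q s = E s / f (\<epsilon> s)" for s
  define X where "X r s = (if 0 < r \<and> s \<in> {0..T} then xi r s else 0)" for r s
  have plays': "\<And>r. r > 0 \<Longrightarrow> \<exists>v N. play_hk T r q (xi r) v N" using plays unfolding q_def[abs_def] .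
  have fc: "continuous_on UNIV f" using f_deriv by (meson DERIV_isCont continuous_at_imp_continuous_on)
  have qc: "continuous_on {0..T} q" unfolding q_def[abs_def]
    using f_pos by (intro continuous_intros Ec continuous_on_compose2[OF fc epsc]) (auto, metis less_irrefl)
  have fed: "((\<lambda>s. f (\<epsilon> s)) has_real_derivative f' (\<epsilon> t) * d\<epsilon>) (at t)"
    using DERIV_chain2[OF f_deriv[rule_format, of "\<epsilon> t"] epsd] .
  obtain dq where qd: "(q has_real_derivative dq) (at t)"
    unfolding q_def[abs_def] using DERIV_divide[OF Ed fed] f_pos by (metis less_irrefl)
  obtain s0 where s0: "s0 > 0" "\<And>h. h \<noteq> 0 \<and> \<bar>h\<bar> < s0 \<Longrightarrow> \<bar>(q (t + h) - q t) / h - dq\<bar> < 1"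
    using deriv_eps[OF qd, of 1] by auto
  define Cq where "Cq = \<bar>dq\<bar> + 1"
  have Cq0: "Cq > 0" by (simp add: Cq_def)
  have qlip: "\<bar>q s - q t\<bar> \<le> Cq * \<bar>s - t\<bar>" if "\<bar>s - t\<bar> < s0" for s
  proof (cases "s = t")
    case False
    define h where "h = s - t"
    have "\<bar>(q (t + h) - q t) / h - dq\<bar> < 1" using s0(2)[of h] that False by (simp add: h_def)
    then have "\<bar>(q (t + h) - q t) / h\<bar> \<le> Cq" unfolding Cq_def by linarith
    then have "\<bar>q (t + h) - q t\<bar> \<le> Cq * \<bar>h\<bar>" using False by (simp add: h_def abs_divide divide_le_eq)
    then show ?thesis by (simp add: h_def)
  qed simp
  define \<delta> where "\<delta> = min s0 (min t (T - t))"
  have \<delta>: "\<delta> > 0" using s0 t by (auto simp: \<delta>_def)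
  have \<delta>s: "s \<in> {0<..<T}" "\<bar>s - t\<bar> < s0" if "\<bar>s - t\<bar> < \<delta>" for s
    using that by (auto simp: \<delta>_def)
  have xlip: "\<bar>xi r s - xi r t\<bar> \<le> 2 * Cq * \<bar>s - t\<bar>" if r: "r > 0" and s: "\<bar>s - t\<bar> < \<delta>" for r s
  proof -
    obtain v N where P: "play_hk T r q (xi r) v N" using plays'[OF r] by blast
    have sT: "s \<in> {0<..<T}" using \<delta>s[OF s] by auto
    show ?thesis
    proof (cases "t \<le> s")
      case True
      have "\<bar>xi r s - xi r t\<bar> \<le> Cq * (s - t)"
      proof (rule play_bound[OF P])
        fix u assume u: "u \<in> {t..s}"
        then have "\<bar>u - t\<bar> < s0" using \<delta>s(2)[OF s] True by auto
        then have "\<bar>q u - q t\<bar> \<le> Cq * \<bar>u - t\<bar>" by (rule qlip)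
        also have "\<dots> \<le> Cq * (s - t)" using u Cq0 by (intro mult_left_mono) auto
        finally show "\<bar>q u - q t\<bar> \<le> Cq * (s - t)" .
      qed (use t sT True in auto)
      then show ?thesis using True Cq0 by (simp add: mult_right_mono)
    next
      case False
      have "\<bar>xi r t - xi r s\<bar> \<le> 2 * Cq * (t - s)"
      proof (rule play_bound[OF P])
        fix u assume u: "u \<in> {s..t}"
        then have "\<bar>u - t\<bar> < s0" using \<delta>s(2)[OF s] False by auto
        then have "\<bar>q u - q t\<bar> \<le> Cq * \<bar>u - t\<bar>" by (rule qlip)
        also have "\<dots> \<le> Cq * (t - s)" using u Cq0 by (intro mult_left_mono) auto
        finally have 1: "\<bar>q u - q t\<bar> \<le> Cq * (t - s)" .
        have "\<bar>q s - q t\<bar> \<le> Cq * \<bar>s - t\<bar>" using \<delta>s(2)[OF s] by (rule qlip)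
        then have 2: "\<bar>q s - q t\<bar> \<le> Cq * (t - s)" using False by simp
        show "\<bar>q u - q s\<bar> \<le> 2 * Cq * (t - s)" using 1 2 by linarith
      qed (use t sT False in auto)
      then show ?thesis using False by (simp add: abs_minus_commute)
    qed
  qed
  obtain Mq where Mq: "\<And>u. u \<in> {0..T} \<Longrightarrow> \<bar>q u\<bar> \<le> Mq"
  proof -
    have "bounded (q ` {0..T})" by (intro compact_imp_bounded compact_continuous_image qc) simp
    then obtain B where "\<forall>x\<in>q ` {0..T}. norm x \<le> B" unfolding bounded_iff by blast
    then show ?thesis by (intro that[of B]) auto
  qed
  have xbound: "\<bar>xi r s\<bar> \<le> 3 * Mq" if r: "r > 0" and s: "s \<in> {0..T}" for r s
  proof -
    obtain v N where P: "play_hk T r q (xi r) v N" using plays'[OF r] by blast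
    have "\<bar>xi r s - xi r 0\<bar> \<le> 2 * Mq"
    proof (rule play_bound[OF P])
      fix u assume "u \<in> {0..s}"
      then have "\<bar>q u\<bar> \<le> Mq" "\<bar>q 0\<bar> \<le> Mq" using s T by (auto intro!: Mq)
      then show "\<bar>q u - q 0\<bar> \<le> 2 * Mq" by linarith
    qed (use s in auto)
    moreover have "\<bar>xi r 0\<bar> \<le> \<bar>q 0\<bar>" using play_hkD(7)[OF P] clamp_abs[OF r] by simp
    moreover have "\<bar>q 0\<bar> \<le> Mq" using T by (intro Mq) auto
    ultimately show ?thesis by linarith
  qed
  have gd: "(g r has_real_derivative dg r v) (at v)" if "r > 0" for r v using g_deriv that by blast
  have dgb: "\<bar>dg r v\<bar> \<le> \<mu> r" if "r > 0" for r v using dg_bound that by fastforce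
  have dg0: "0 \<le> dg r v" if "r > 0" for r v using dg_bound that by blast
  have mu0: "0 \<le> \<mu> r" if "r > 0" for r using dg_bound that by (meson order_trans)
  have mu10: "0 \<le> \<mu>1 r" if "r > 0" for r using dg_bound1 that by (metis abs_zero mult_zero_left)
  have glip: "\<bar>g r a - g r b\<bar> \<le> \<mu> r * \<bar>a - b\<bar>" if "r > 0" for r a b
    by (rule deriv_lip[OF gd[OF that] dgb[OF that]])
  have gbnd: "\<bar>g r v\<bar> \<le> \<mu> r * \<bar>v\<bar>" if "r > 0" for r v
    using glip[OF that, of v 0] g0 that by simp
  have gcont: "continuous_on UNIV (g r)" if "r > 0" for r
    using gd[OF that] by (meson DERIV_isCont continuous_at_imp_continuous_on)
  have Gpot_eq: "Gpot dg r = (\<lambda>v. LBINT x=0..v. x * dg r x)" for r by (rule ext) (simp add: Gpot_def)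
  have Gd: "(Gpot dg r has_real_derivative v * dg r v) (at v)" if "r > 0" for r v
    unfolding Gpot_eq by (rule Gpot_H(2)[OF gd[OF that] dgb[OF that]])
  have GH: "Gpot dg r v = v * g r v - (LBINT x=0..v. g r x)" if "r > 0" for r v
    unfolding Gpot_eq by (rule Gpot_H(1)[OF gd[OF that] dgb[OF that]])
  have Gdb: "\<bar>v * dg r v\<bar> \<le> \<mu>1 r" if "r > 0" for r v
    using dg_bound1 dg0[OF that, of v] that by (simp add: abs_mult)
  have Glip: "\<bar>Gpot dg r a - Gpot dg r b\<bar> \<le> \<mu>1 r * \<bar>a - b\<bar>" if "r > 0" for r a b
    by (rule deriv_lip[OF Gd[OF that] Gdb[OF that]])
  have G0: "Gpot dg r 0 = 0" for r by (simp add: Gpot_def zero_ereal_def[symmetric])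
  have Gbnd: "\<bar>Gpot dg r v\<bar> \<le> \<mu>1 r * \<bar>v\<bar>" if "r > 0" for r v
    using Glip[OF that, of v 0] G0 by simp
  have Gcont: "continuous_on UNIV (Gpot dg r)" if "r > 0" for r
    using Gd[OF that] by (meson DERIV_isCont continuous_at_imp_continuous_on)
  define gt where "gt r v = indicator {0<..} r * g r v" for r v
  define Gt where "Gt r v = v * gt r v - (LBINT x=0..v. gt r x)" for r v
  have gt_pos: "gt r = g r" if "r > 0" for r using that by (auto simp: gt_def)
  have gt_neg: "gt r = (\<lambda>v. 0)" if "\<not> r > 0" for r using that by (auto simp: gt_def)
  have Gt_pos: "Gt r = Gpot dg r" if "r > 0" for r
    by (rule ext) (simp add: Gt_def gt_pos[OF that] GH[OF that])
  have Gt_neg: "Gt r = (\<lambda>v. 0)" if "\<not> r > 0" for r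
    by (rule ext) (simp add: Gt_def gt_neg[OF that])
  have gtm: "(\<lambda>p::real\<times>real. gt (fst p) (snd p)) \<in> borel_measurable borel"
    unfolding gt_def using gt_joint[of g] g_meas gcont by blast
  have gtr: "(\<lambda>r. gt r v) \<in> borel_measurable borel" for v
    using g_meas unfolding set_borel_measurable_def gt_def by simp
  have Gtr: "(\<lambda>r. Gt r v) \<in> borel_measurable borel" for v
    unfolding Gt_def by (intro borel_measurable_diff borel_measurable_times borel_measurable_const gtr LBINT_meas gtm)
  have gtc: "continuous_on UNIV (gt r)" for r
    by (cases "r > 0") (simp_all add: gt_pos gt_neg gcont)
  have Gtc: "continuous_on UNIV (Gt r)" for r
    by (cases "r > 0") (simp_all add: Gt_pos Gt_neg Gcont)
  have Xm: "(\<lambda>p. X (fst p) (snd p)) \<in> borel_measurable borel"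
    unfolding X_def by (rule xi_joint_meas[OF plays'])
  have Xsm: "(\<lambda>r. X r s) \<in> borel_measurable borel" for s
  proof -
    have "(\<lambda>r::real. (r, s)) \<in> borel_measurable borel" by (intro borel_measurable_continuous_onI continuous_intros)
    from measurable_compose[OF this Xm] show ?thesis by simp
  qed
  define \<Phi>g where "\<Phi>g = (\<lambda>r s. indicator {0<..} r *\<^sub>R g r (xi r s))"
  define \<Phi>G where "\<Phi>G = (\<lambda>r s. indicator {0<..} r *\<^sub>R Gpot dg r (xi r s))"
  have Peq: "preisach g xi = (\<lambda>s. \<integral>r. \<Phi>g r s \<partial>lborel)"
    by (rule ext) (simp add: preisach_def set_lebesgue_integral_def \<Phi>g_def)
  have Ueq: "potential dg xi = (\<lambda>s. \<integral>r. \<Phi>G r s \<partial>lborel)"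
    by (rule ext) (simp add: potential_def set_lebesgue_integral_def \<Phi>G_def)
  have \<Phi>g_X: "\<Phi>g r s = gt r (X r s)" if "s \<in> {0..T}" for r s
    using that by (cases "r > 0") (simp_all add: \<Phi>g_def X_def gt_def)
  have \<Phi>G_X: "\<Phi>G r s = Gt r (X r s)" if "s \<in> {0..T}" for r s
    using that by (cases "r > 0") (simp_all add: \<Phi>G_def X_def Gt_pos Gt_neg)
  have meas_g: "(\<lambda>r. \<Phi>g r s) \<in> borel_measurable lborel" if "\<bar>s - t\<bar> < \<delta>" for s
  proof -
    have s: "s \<in> {0..T}" using \<delta>s[OF that] by auto
    have "(\<lambda>r. gt r (X r s)) \<in> borel_measurable borel" by (rule cara_meas[OF gtr gtc Xsm])
    then show ?thesis using \<Phi>g_X[OF s] by simp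
  qed
  have meas_G: "(\<lambda>r. \<Phi>G r s) \<in> borel_measurable lborel" if "\<bar>s - t\<bar> < \<delta>" for s
  proof -
    have s: "s \<in> {0..T}" using \<delta>s[OF that] by auto
    have "(\<lambda>r. Gt r (X r s)) \<in> borel_measurable borel" by (rule cara_meas[OF Gtr Gtc Xsm])
    then show ?thesis using \<Phi>G_X[OF s] by simp
  qed
  have muI: "integrable lborel (\<lambda>r. indicator {0<..} r * \<mu> r)"
    using mu_int unfolding set_integrable_def by simp
  have mu1I: "integrable lborel (\<lambda>r. indicator {0<..} r * \<mu>1 r)"
    using mu1_int unfolding set_integrable_def by simp
  have tT: "t \<in> {0..T}" using t by auto
  have xid: "AE r in lborel. r > 0 \<longrightarrow> (\<exists>d. (xi r has_real_derivative d) (at t))"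
    using aeCQ
  proof eventually_elim
    case (elim r)
    show ?case
    proof
      assume r: "r > 0"
      obtain v N where P: "play_hk T r q (xi r) v N" using plays'[OF r] by blast
      show "\<exists>d. (xi r has_real_derivative d) (at t)" by (rule X_diff[OF P r t]) (use elim r in blast)
    qed
  qed
  have intg0: "integrable lborel (\<lambda>r. \<Phi>g r t)"
  proof (rule Bochner_Integration.integrable_bound[where f="\<lambda>r. indicator {0<..} r * \<mu> r * (3 * Mq)"])
    show "integrable lborel (\<lambda>r. indicator {0<..} r * \<mu> r * (3 * Mq))" using muI by simp
    show "(\<lambda>r. \<Phi>g r t) \<in> borel_measurable lborel" using \<delta> by (intro meas_g) simp
    show "AE r in lborel. norm (\<Phi>g r t) \<le> norm (indicator {0<..} r * \<mu> r * (3 * Mq))"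
    proof (intro AE_I2)
      fix r show "norm (\<Phi>g r t) \<le> norm (indicator {0<..} r * \<mu> r * (3 * Mq))"
      proof (cases "r > 0")
        case True
        have "\<bar>g r (xi r t)\<bar> \<le> \<mu> r * \<bar>xi r t\<bar>" by (rule gbnd[OF True])
        also have "\<dots> \<le> \<mu> r * (3 * Mq)" using xbound[OF True tT] mu0[OF True] by (intro mult_left_mono)
        finally show ?thesis using True by (simp add: \<Phi>g_def)
      qed (simp add: \<Phi>g_def)
    qed
  qed
  have intG0: "integrable lborel (\<lambda>r. \<Phi>G r t)"
  proof (rule Bochner_Integration.integrable_bound[where f="\<lambda>r. indicator {0<..} r * \<mu>1 r * (3 * Mq)"])
    show "integrable lborel (\<lambda>r. indicator {0<..} r * \<mu>1 r * (3 * Mq))" using mu1I by simp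
    show "(\<lambda>r. \<Phi>G r t) \<in> borel_measurable lborel" using \<delta> by (intro meas_G) simp
    show "AE r in lborel. norm (\<Phi>G r t) \<le> norm (indicator {0<..} r * \<mu>1 r * (3 * Mq))"
    proof (intro AE_I2)
      fix r show "norm (\<Phi>G r t) \<le> norm (indicator {0<..} r * \<mu>1 r * (3 * Mq))"
      proof (cases "r > 0")
        case True
        have "\<bar>Gpot dg r (xi r t)\<bar> \<le> \<mu>1 r * \<bar>xi r t\<bar>" by (rule Gbnd[OF True])
        also have "\<dots> \<le> \<mu>1 r * (3 * Mq)" using xbound[OF True tT] mu10[OF True] by (intro mult_left_mono)
        finally show ?thesis using True by (simp add: \<Phi>G_def)
      qed (simp add: \<Phi>G_def)
    qed
  qed
  have lipg: "\<bar>\<Phi>g r s - \<Phi>g r t\<bar> \<le> (indicator {0<..} r * \<mu> r * (2 * Cq)) * \<bar>s - t\<bar>" if s: "\<bar>s - t\<bar> < \<delta>" for r s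
  proof (cases "r > 0")
    case True
    have "\<bar>g r (xi r s) - g r (xi r t)\<bar> \<le> \<mu> r * \<bar>xi r s - xi r t\<bar>" by (rule glip[OF True])
    also have "\<dots> \<le> \<mu> r * (2 * Cq * \<bar>s - t\<bar>)" using xlip[OF True s] mu0[OF True] by (intro mult_left_mono)
    finally show ?thesis using True by (simp add: \<Phi>g_def mult.assoc)
  qed (simp add: \<Phi>g_def)
  have lipG: "\<bar>\<Phi>G r s - \<Phi>G r t\<bar> \<le> (indicator {0<..} r * \<mu>1 r * (2 * Cq)) * \<bar>s - t\<bar>" if s: "\<bar>s - t\<bar> < \<delta>" for r s
  proof (cases "r > 0")
    case True
    have "\<bar>Gpot dg r (xi r s) - Gpot dg r (xi r t)\<bar> \<le> \<mu>1 r * \<bar>xi r s - xi r t\<bar>" by (rule Glip[OF True])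
    also have "\<dots> \<le> \<mu>1 r * (2 * Cq * \<bar>s - t\<bar>)" using xlip[OF True s] mu10[OF True] by (intro mult_left_mono)
    finally show ?thesis using True by (simp add: \<Phi>G_def mult.assoc)
  qed (simp add: \<Phi>G_def)
  have dgx: "(\<Phi>g r has_real_derivative dg r (xi r t) * d) (at t)"
    if r: "r > 0" and d: "(xi r has_real_derivative d) (at t)" for r d
  proof -
    have "\<Phi>g r = (\<lambda>s. g r (xi r s))" using r by (auto simp: \<Phi>g_def)
    then show ?thesis using DERIV_chain2[OF gd[OF r] d] by simp
  qed
  have dGx: "(\<Phi>G r has_real_derivative xi r t * dg r (xi r t) * d) (at t)"
    if r: "r > 0" and d: "(xi r has_real_derivative d) (at t)" for r d
  proof -
    have "\<Phi>G r = (\<lambda>s. Gpot dg r (xi r s))" using r by (auto simp: \<Phi>G_def)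
    then show ?thesis using DERIV_chain2[OF Gd[OF r] d] by simp
  qed
  have dneg: "\<Phi>g r = (\<lambda>s. 0)" "\<Phi>G r = (\<lambda>s. 0)" if "\<not> r > 0" for r
    using that by (auto simp: \<Phi>g_def \<Phi>G_def)
  have diffg: "AE r in lborel. \<exists>d. (\<Phi>g r has_real_derivative d) (at t)"
    using xid
  proof eventually_elim
    case (elim r)
    show ?case
    proof (cases "r > 0")
      case True then obtain d where "(xi r has_real_derivative d) (at t)" using elim by blast
      then show ?thesis using dgx[OF True] by blast
    next
      case False then show ?thesis by (intro exI[of _ 0]) (simp add: dneg[OF False])
    qed
  qed
  have diffG: "AE r in lborel. \<exists>d. (\<Phi>G r has_real_derivative d) (at t)"
    using xid
  proof eventually_elim
    case (elim r)
    show ?case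
    proof (cases "r > 0")
      case True then obtain d where "(xi r has_real_derivative d) (at t)" using elim by blast
      then show ?thesis using dGx[OF True] by blast
    next
      case False then show ?thesis by (intro exI[of _ 0]) (simp add: dneg[OF False])
    qed
  qed
  obtain Dg where Dg: "Dg \<in> borel_measurable lborel" "integrable lborel Dg"
      "AE r in lborel. (\<Phi>g r has_real_derivative Dg r) (at t)"
      "((\<lambda>s. \<integral>r. \<Phi>g r s \<partial>lborel) has_real_derivative (\<integral>r. Dg r \<partial>lborel)) (at t)"
    using DQ[OF \<delta> meas_g _ intg0 lipg diffg] muI by auto
  obtain DG where DG: "DG \<in> borel_measurable lborel" "integrable lborel DG"
      "AE r in lborel. (\<Phi>G r has_real_derivative DG r) (at t)"
      "((\<lambda>s. \<integral>r. \<Phi>G r s \<partial>lborel) has_real_derivative (\<integral>r. DG r \<partial>lborel)) (at t)"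
    using DQ[OF \<delta> meas_G _ intG0 lipG diffG] mu1I by auto
  have ineqAE: "AE r in lborel. 0 \<le> q t * Dg r - DG r"
    using xid Dg(3) DG(3)
  proof eventually_elim
    case (elim r)
    show ?case
    proof (cases "r > 0")
      case True
      then obtain d where d: "(xi r has_real_derivative d) (at t)" using elim by blast
      obtain v N where P: "play_hk T r q (xi r) v N" using plays'[OF True] by blast
      have 1: "Dg r = dg r (xi r t) * d" using DERIV_unique[OF elim(2) dgx[OF True d]] .
      have 2: "DG r = xi r t * dg r (xi r t) * d" using DERIV_unique[OF elim(3) dGx[OF True d]] .
      have 3: "d * (q t - xi r t) \<ge> 0" by (rule play_sign[OF P True qc t d])
      have "q t * Dg r - DG r = dg r (xi r t) * (d * (q t - xi r t))" unfolding 1 2 by (simp add: algebra_simps)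
      also have "\<dots> \<ge> 0" using dg0[OF True] 3 by simp
      finally show ?thesis .
    next
      case False
      have "Dg r = 0" using DERIV_unique[OF elim(2)] dneg(1)[OF False] by simp
      moreover have "DG r = 0" using DERIV_unique[OF elim(3)] dneg(2)[OF False] by simp
      ultimately show ?thesis by simp
    qed
  qed
  have key: "0 \<le> q t * (\<integral>r. Dg r \<partial>lborel) - (\<integral>r. DG r \<partial>lborel)"
  proof -
    have "0 \<le> (\<integral>r. q t * Dg r - DG r \<partial>lborel)" by (rule integral_nonneg_AE[OF ineqAE])
    also have "\<dots> = q t * (\<integral>r. Dg r \<partial>lborel) - (\<integral>r. DG r \<partial>lborel)"
      using Dg(2) DG(2) by simp
    finally show ?thesis .
  qed
  define U where "U = potential dg xi"
  define IDg where "IDg = (\<integral>r. Dg r \<partial>lborel)"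
  define IDG where "IDG = (\<integral>r. DG r \<partial>lborel)"
  have Pd: "(preisach g xi has_real_derivative IDg) (at t)" unfolding Peq IDg_def by (rule Dg(4))
  have Ud: "(U has_real_derivative IDG) (at t)" unfolding U_def Ueq IDG_def by (rule DG(4))
  define dD where "dD = e * d\<epsilon> + \<kappa> * dE + IDg"
  define dF where "dF = c / 2 * (of_nat 2 * (d\<epsilon> * \<epsilon> t ^ (2 - Suc 0))) + \<kappa> / 2 * (of_nat 2 * (dE * E t ^ (2 - Suc 0)))
     + (f' (\<epsilon> t) * d\<epsilon> * U t + IDG * f (\<epsilon> t))"
  have D1: "((\<lambda>s. e * \<epsilon> s + \<kappa> * E s + preisach g xi s) has_real_derivative dD) (at t)"
    unfolding dD_def by (intro DERIV_add DERIV_cmult epsd Ed Pd)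
  have F1: "((\<lambda>s. c / 2 * (\<epsilon> s)\<^sup>2 + \<kappa> / 2 * (E s)\<^sup>2 + f (\<epsilon> s) * potential dg xi s) has_real_derivative dF) (at t)"
    unfolding dF_def U_def[symmetric] by (intro DERIV_add DERIV_cmult DERIV_power epsd Ed DERIV_mult fed Ud)
  have fe: "f (\<epsilon> t) > 0" using f_pos by blast
  have Et: "E t = f (\<epsilon> t) * q t" using fe by (simp add: q_def)
  have "d\<epsilon> * (c * \<epsilon> t - e * E t + f' (\<epsilon> t) * potential dg xi t) + dD * E t - dF = f (\<epsilon> t) * (q t * IDg - IDG)"
    unfolding dD_def dF_def U_def[symmetric] Et by (simp add: algebra_simps)
  also have "\<dots> \<ge> 0" using key fe unfolding IDg_def IDG_def by simp
  finally show ?thesis using epsd D1 F1 by blast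


qed



lemma negligible_AE:
  assumes N: "negligible N" and P: "\<And>t. t \<notin> N \<Longrightarrow> P t"
  shows "AE t in lborel. P t"
proof -
  have "N \<in> null_sets lebesgue" using N by (simp add: negligible_iff_null_sets)
  then have "AE t in lebesgue. P t" by (rule AE_I') (use P in auto)
  then show ?thesis by (simp add: AE_completion_iff)
qed

theorem mainTheorem7:
  fixes T c \<kappa> e :: real and f f' \<mu> \<mu>1 \<epsilon> E :: "real \<Rightarrow> real"
    and g dg xi :: "real \<Rightarrow> real \<Rightarrow> real"
  assumes T: "T > 0"
    and g0: "\<forall>r>0. g r 0 = 0"
    and g_deriv: "\<forall>r>0. \<forall>v. (g r has_real_derivative dg r v) (at v)"
    and dg_bound: "\<forall>r>0. \<forall>v. 0 \<le> dg r v \<and> dg r v \<le> \<mu> r"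
    and dg_bound1: "\<forall>r>0. \<forall>v. \<bar>v\<bar> * dg r v \<le> \<mu>1 r"
    and mu_int: "set_integrable lborel {0<..} \<mu>"
    and mu1_int: "set_integrable lborel {0<..} \<mu>1"
    and g_meas: "\<forall>v. set_borel_measurable lborel {0<..} (\<lambda>r. g r v)"
    and c: "c > 0" and kappa: "\<kappa> > 0"
    and f_deriv: "\<forall>x. (f has_real_derivative f' x) (at x)"
    and f'_cont: "continuous_on UNIV f'"
    and f_pos: "\<forall>x. f x > 0"
    and f'_bdd: "\<forall>K. bounded K \<longrightarrow> bounded (f' ` K)"
    and eps: "W11 T \<epsilon>" and EE: "W11 T E"
    and play: "\<forall>r>0. play_solution T r (\<lambda>t. E t / f (\<epsilon> t)) (xi r)"
  shows "AE t in lborel. t \<in> {0<..<T} \<longrightarrow>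
    (\<exists>d\<epsilon> dD dF.
       (\<epsilon> has_real_derivative d\<epsilon>) (at t) \<and>
       ((\<lambda>s. e * \<epsilon> s + \<kappa> * E s + preisach g xi s) has_real_derivative dD) (at t) \<and>
       ((\<lambda>s. c / 2 * (\<epsilon> s)\<^sup>2 + \<kappa> / 2 * (E s)\<^sup>2 + f (\<epsilon> s) * potential dg xi s)
          has_real_derivative dF) (at t) \<and>
       d\<epsilon> * (c * \<epsilon> t - e * E t + f' (\<epsilon> t) * potential dg xi t) + dD * E t - dF \<ge> 0)"
proof -
  define q where "q s = E s / f (\<epsilon> s)" for s
  define X where "X r s = (if 0 < r \<and> s \<in> {0..T} then xi r s else 0)" for r s
  have plays: "\<And>r. r > 0 \<Longrightarrow> \<exists>v N. play_hk T r (\<lambda>t. E t / f (\<epsilon> t)) (xi r) v N"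
    using play play_hk_exists by blast
  have plays': "\<And>r. r > 0 \<Longrightarrow> \<exists>v N. play_hk T r q (xi r) v N" using plays unfolding q_def[abs_def] .
  have epsc: "continuous_on {0..T} \<epsilon>" by (rule W11_cont[OF eps])
  have Ec: "continuous_on {0..T} E" by (rule W11_cont[OF EE])
  have Xm: "(\<lambda>p. X (fst p) (snd p)) \<in> borel_measurable borel"
    unfolding X_def by (rule xi_joint_meas[OF plays'])
  have CQm: "{p :: real \<times> real. CQ (X (fst p)) (snd p)} \<in> sets borel" by (rule CQ_set_meas[OF Xm])
  define P where "P r t = (r > 0 \<longrightarrow> t \<in> {0<..<T} \<longrightarrow> CQ (X r) t)" for r t
  have o1: "open {p::real\<times>real. 0 < fst p}" by (intro open_Collect_less continuous_intros)
  have o2: "open {p::real\<times>real. snd p \<in> {0<..<T}}"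
  proof -
    have "{p::real\<times>real. snd p \<in> {0<..<T}} = UNIV \<times> {0<..<T}" by auto
    then show ?thesis by (simp add: open_Times)
  qed
  have "{p::real\<times>real. P (fst p) (snd p)} = - {p. 0 < fst p} \<union> - {p. snd p \<in> {0<..<T}} \<union> {p. CQ (X (fst p)) (snd p)}"
    by (auto simp: P_def)
  also have "\<dots> \<in> sets borel"
    by (intro sets.Un borel_comp borel_open o1 o2 CQm)
  finally have Pm: "{p::real\<times>real. P (fst p) (snd p)} \<in> sets borel" .
  have Pae: "AE t in lborel. P r t" for r
  proof (cases "r > 0")
    case False then show ?thesis by (simp add: P_def)
  next
    case True
    obtain v N where Pl: "play_hk T r q (xi r) v N" using plays'[OF True] by blast
    show ?thesis
    proof (rule negligible_AE[OF play_hkD(5)[OF Pl]])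
      fix t assume tN: "t \<notin> N"
      show "P r t" unfolding P_def
      proof (intro impI)
        assume t: "t \<in> {0<..<T}"
        obtain d where d: "(xi r has_real_derivative d) (at t)"
          using play_hkD(6)[OF Pl t tN] by blast
        have "(X r has_real_derivative d) (at t)"
          by (rule has_field_derivative_transform_within_open[OF d, where S="{0<..<T}"]) (use t True in \<open>auto simp: X_def\<close>)
        then show "CQ (X r) t" by (rule diff_imp_CQ)
      qed
    qed
  qed
  have swap: "AE t in lborel. AE r in lborel. P r t" by (rule AE_swap_borel[OF Pm Pae])
  obtain N1 where N1: "negligible N1" "\<And>t. t \<in> {0<..<T} \<Longrightarrow> t \<notin> N1 \<Longrightarrow> \<epsilon> differentiable (at t)"
    using W11_diff[OF eps] by blast
  obtain N2 where N2: "negligible N2" "\<And>t. t \<in> {0<..<T} \<Longrightarrow> t \<notin> N2 \<Longrightarrow> E differentiable (at t)"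
    using W11_diff[OF EE] by blast
  have ae1: "AE t in lborel. t \<in> {0<..<T} \<longrightarrow> \<epsilon> differentiable (at t)"
    by (rule negligible_AE[OF N1(1)]) (use N1(2) in blast)
  have ae2: "AE t in lborel. t \<in> {0<..<T} \<longrightarrow> E differentiable (at t)"
    by (rule negligible_AE[OF N2(1)]) (use N2(2) in blast)
  show ?thesis
    using swap ae1 ae2
  proof eventually_elim
    case (elim t)
    show ?case
    proof
      assume t: "t \<in> {0<..<T}"
      obtain d\<epsilon> where epsd: "(\<epsilon> has_real_derivative d\<epsilon>) (at t)"
        using elim(2) t real_differentiable_def by blast
      obtain dE where Ed: "(E has_real_derivative dE) (at t)"
        using elim(3) t real_differentiable_def by blast
      have aeCQ: "AE r in lborel. r > 0 \<longrightarrow> CQ (\<lambda>s. if 0 < r \<and> s \<in> {0..T} then xi r s else 0) t"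
        using elim(1) by eventually_elim (use t in \<open>auto simp: P_def X_def[abs_def]\<close>)
      show "\<exists>d\<epsilon> dD dF.
       (\<epsilon> has_real_derivative d\<epsilon>) (at t) \<and>
       ((\<lambda>s. e * \<epsilon> s + \<kappa> * E s + preisach g xi s) has_real_derivative dD) (at t) \<and>
       ((\<lambda>s. c / 2 * (\<epsilon> s)\<^sup>2 + \<kappa> / 2 * (E s)\<^sup>2 + f (\<epsilon> s) * potential dg xi s)
          has_real_derivative dF) (at t) \<and>
       d\<epsilon> * (c * \<epsilon> t - e * E t + f' (\<epsilon> t) * potential dg xi t) + dD * E t - dF \<ge> 0"
        by (rule pointwise[OF T g0 g_deriv dg_bound dg_bound1 mu_int mu1_int g_meas c kappa f_deriv f_pos
              epsc Ec plays t epsd Ed aeCQ])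
    qed
  qed
qed


end
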